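(* Let $S=\{x_1,\dots,x_n\}$ be a GCD closed set of positive integers in which every element generates a double-chain set in $S$. Then the inertia of the LCM matrix $[S]$ is $(i_+([S]),i_-([S]),i_0([S]))$ with $i_0([S])=0$, $i_-([S])=|\{x_k\in S: |C_S(x_k)|=1\}|$ and $i_+([S])=n-i_-([S])=|\{x_k\in S: |C_S(x_k)|\ne 1\}|$.
   Context: The inertia of a real symmetric matrix $M$ is the triple $(i_+(M),i_-(M),i_0(M))$ of the numbers of positive, negative and zero eigenvalues (with multiplicity). The LCM matrix $[S]$ has $(i,j)$ entry $\mathrm{lcm}(x_i,x_j)$. All order notions are with respect to divisibility, with meet $\gcd$; $S$ is GCD closed if $\gcd(x,y)\in S$ for all $x,y\in S$. $C_S(x)$ is the set of elements of $S$ covered by $x$ in $(S,\mid)$; $\mathrm{meetcl}(C)$ is the set of gcds of all nonempty finite subsets of $C$. An element $x\in S$ generates a double-chain set in $S$ if $\mathrm{meetcl}(C_S(x))\setminus C_S(x)$ is a union of two disjoint (possibly empty) chains under divisibility. *)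

theory Defs
  imports "Jordan_Normal_Form.Char_Poly"
begin

definition covered_by :: "nat set \<Rightarrow> nat \<Rightarrow> nat set" where
  "covered_by S x = {y \<in> S. y dvd x \<and> y \<noteq> x \<and>
       \<not> (\<exists>z\<in>S. y dvd z \<and> z dvd x \<and> z \<noteq> y \<and> z \<noteq> x)}"

definition meetcl :: "nat set \<Rightarrow> nat set" where
  "meetcl C = {Gcd T | T. T \<subseteq> C \<and> T \<noteq> {} \<and> finite T}"

definition gcd_closed :: "nat set \<Rightarrow> bool" where
  "gcd_closed S \<longleftrightarrow> (\<forall>x\<in>S. \<forall>y\<in>S. gcd x y \<in> S)"

definition dvd_chain :: "nat set \<Rightarrow> bool" where
  "dvd_chain A \<longleftrightarrow> (\<forall>a\<in>A. \<forall>b\<in>A. a dvd b \<or> b dvd a)"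

definition generates_double_chain :: "nat set \<Rightarrow> nat \<Rightarrow> bool" where
  "generates_double_chain S x \<longleftrightarrow>
     (\<exists>A B. A \<inter> B = {} \<and> dvd_chain A \<and> dvd_chain B \<and>
            meetcl (covered_by S x) - covered_by S x = A \<union> B)"

definition lcm_matrix :: "nat list \<Rightarrow> real mat" where
  "lcm_matrix xs = mat (length xs) (length xs) (\<lambda>(i,j). real (lcm (xs ! i) (xs ! j)))"

(* numbers of positive / negative / zero eigenvalues, counted with (algebraic) multiplicity,
   i.e. as roots of the characteristic polynomial *)
definition pos_inertia :: "real mat \<Rightarrow> nat" where
  "pos_inertia A = (\<Sum>a\<in>{a. poly (char_poly A) a = 0 \<and> a > 0}. order a (char_poly A))"

definition neg_inertia :: "real mat \<Rightarrow> nat" where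
  "neg_inertia A = (\<Sum>a\<in>{a. poly (char_poly A) a = 0 \<and> a < 0}. order a (char_poly A))"

definition zero_inertia :: "real mat \<Rightarrow> nat" where
  "zero_inertia A = order 0 (char_poly A)"

definition inertia :: "real mat \<Rightarrow> nat \<times> nat \<times> nat" where
  "inertia A = (pos_inertia A, neg_inertia A, zero_inertia A)"

end

theory Submission
  imports Defs "Jordan_Normal_Form.Schur_Decomposition" "HOL-Computational_Algebra.Fundamental_Theorem_Algebra"
begin


lemma order_prod_diag:
  fixes d :: "nat \<Rightarrow> real"
  shows "Polynomial.order a (\<Prod>b\<leftarrow>map d [0..<n]. [:- b, 1:]) = card {i. i < n \<and> d i = a}"
proof (induction n)
  case 0
  then show ?case by simp
next
  case (Suc n)
  have ne: "(\<Prod>b\<leftarrow>map d [0..<n]. [:- b, 1:]) \<noteq> 0"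
    by (auto simp: prod_list_zero_iff)
  have "(\<Prod>b\<leftarrow>map d [0..<Suc n]. [:- b, 1:]) = (\<Prod>b\<leftarrow>map d [0..<n]. [:- b, 1:]) * [:- d n, 1:]"
    by simp
  moreover have "(\<Prod>b\<leftarrow>map d [0..<n]. [:- b, 1:]) * [:- d n, 1:] \<noteq> 0"
  proof -
    have "[:- d n, 1:] \<noteq> 0" by simp
    thus ?thesis using ne by (metis mult_eq_0_iff)
  qed
  ultimately have "Polynomial.order a (\<Prod>b\<leftarrow>map d [0..<Suc n]. [:- b, 1:]) =
     Polynomial.order a (\<Prod>b\<leftarrow>map d [0..<n]. [:- b, 1:]) + Polynomial.order a [:- d n, 1:]"
    by (metis order_mult)
  also have "\<dots> = card {i. i < n \<and> d i = a} + (if d n = a then 1 else 0)"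
    using Suc by (simp add: order_linear')
  also have "\<dots> = card {i. i < Suc n \<and> d i = a}"
  proof -
    have "{i. i < Suc n \<and> d i = a} = {i. i < n \<and> d i = a} \<union> (if d n = a then {n} else {})"
      by (auto simp: less_Suc_eq)
    thus ?thesis by auto
  qed
  finally show ?case .
qed

lemma inertia_diag:
  fixes A :: "real mat" and d :: "nat \<Rightarrow> real"
  assumes cp: "char_poly A = (\<Prod>b\<leftarrow>map d [0..<n]. [:- b, 1:])"
  shows "pos_inertia A = card {i. i < n \<and> d i > 0}"
    "neg_inertia A = card {i. i < n \<and> d i < 0}"
    "zero_inertia A = card {i. i < n \<and> d i = 0}"
proof -
  let ?p = "char_poly A"
  have ne: "?p \<noteq> 0" unfolding cp by (auto simp: prod_list_zero_iff)
  have ord: "\<And>a. Polynomial.order a ?p = card {i. i < n \<and> d i = a}"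
    unfolding cp by (rule order_prod_diag)
  have root: "\<And>a. poly ?p a = 0 \<longleftrightarrow> (\<exists>i<n. d i = a)"
  proof -
    fix a
    have "poly ?p a = 0 \<longleftrightarrow> Polynomial.order a ?p \<noteq> 0" using ne order_root by blast
    also have "\<dots> \<longleftrightarrow> card {i. i < n \<and> d i = a} \<noteq> 0" using ord by simp
    also have "\<dots> \<longleftrightarrow> (\<exists>i<n. d i = a)" by auto
    finally show "poly ?p a = 0 \<longleftrightarrow> (\<exists>i<n. d i = a)" .
  qed
  have gen: "(\<Sum>a\<in>{a. poly ?p a = 0 \<and> P a}. Polynomial.order a ?p) = card {i. i < n \<and> P (d i)}" for P
  proof -
    have eq: "{a. poly ?p a = 0 \<and> P a} = d ` {i. i < n \<and> P (d i)}" using root by auto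
    have "card {i. i < n \<and> P (d i)} = (\<Sum>a\<in>d ` {i. i < n \<and> P (d i)}. card {i \<in> {i. i < n \<and> P (d i)}. d i = a})"
      unfolding card_eq_sum by (rule sum.image_gen) auto
    also have "\<dots> = (\<Sum>a\<in>d ` {i. i < n \<and> P (d i)}. Polynomial.order a ?p)"
      by (rule sum.cong, auto simp: ord intro!: arg_cong[where f=card])
    finally show ?thesis unfolding eq by simp
  qed
  show "pos_inertia A = card {i. i < n \<and> d i > 0}"
    unfolding pos_inertia_def using gen[of "\<lambda>a. a > 0"] by simp
  show "neg_inertia A = card {i. i < n \<and> d i < 0}"
    unfolding neg_inertia_def using gen[of "\<lambda>a. a < 0"] by simp
  show "zero_inertia A = card {i. i < n \<and> d i = 0}"
    unfolding zero_inertia_def using ord by simp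
qed


lemma sym_real_eigen:
  fixes A :: "real mat"
  assumes A: "A \<in> carrier_mat n n" and sym: "transpose_mat A = A" and n: "n > 0"
  shows "\<exists>e v. v \<in> carrier_vec n \<and> v \<noteq> 0\<^sub>v n \<and> A *\<^sub>v v = e \<cdot>\<^sub>v v"
proof -
  define Ac where "Ac = map_mat complex_of_real A"
  have Ac: "Ac \<in> carrier_mat n n" using A unfolding Ac_def by simp
  have cp: "char_poly Ac = map_poly complex_of_real (char_poly A)"
    unfolding Ac_def by (rule of_real_hom.char_poly_hom[OF A])
  have "degree (char_poly Ac) = n" using degree_monic_char_poly[OF Ac] by simp
  hence "\<not> constant (poly (char_poly Ac))" using n by (simp add: constant_degree)
  then obtain z where z: "poly (char_poly Ac) z = 0" using fundamental_theorem_of_algebra by blast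
  hence "eigenvalue Ac z" using eigenvalue_root_char_poly[OF Ac] by simp
  then obtain v where v: "v \<in> carrier_vec n" "v \<noteq> 0\<^sub>v n" "Ac *\<^sub>v v = z \<cdot>\<^sub>v v"
    unfolding eigenvalue_def eigenvector_def using Ac by auto
  define s where "s = (\<Sum>i<n. \<Sum>j<n. cnj (v $ i) * complex_of_real (A $$ (i,j)) * v $ j)"
  define N where "N = (\<Sum>i<n. cnj (v $ i) * v $ i)"
  have row: "(\<Sum>j<n. complex_of_real (A $$ (i,j)) * v $ j) = z * v $ i" if i: "i < n" for i
  proof -
    have "(Ac *\<^sub>v v) $ i = z * v $ i" using v(3) i v(1) by simp
    moreover have "(Ac *\<^sub>v v) $ i = (\<Sum>j<n. complex_of_real (A $$ (i,j)) * v $ j)"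
      using i v(1) Ac A unfolding Ac_def
      by (simp add: mult_mat_vec_def scalar_prod_def row_def lessThan_atLeast0)
    ultimately show ?thesis by simp
  qed
  have sN: "s = z * N"
  proof -
    have "s = (\<Sum>i<n. cnj (v $ i) * (\<Sum>j<n. complex_of_real (A $$ (i,j)) * v $ j))"
      unfolding s_def by (simp add: sum_distrib_left mult.assoc)
    also have "\<dots> = (\<Sum>i<n. cnj (v $ i) * (z * v $ i))"
      by (rule sum.cong, simp, simp add: row)
    also have "\<dots> = z * N" unfolding N_def by (simp add: sum_distrib_left algebra_simps)
    finally show ?thesis .
  qed
  have cs: "cnj s = s"
  proof -
    have "cnj s = (\<Sum>i<n. \<Sum>j<n. v $ i * complex_of_real (A $$ (i,j)) * cnj (v $ j))"
      unfolding s_def by simp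
    also have "\<dots> = (\<Sum>j<n. \<Sum>i<n. v $ i * complex_of_real (A $$ (i,j)) * cnj (v $ j))"
      by (rule sum.swap)
    also have "\<dots> = s" unfolding s_def
    proof (rule sum.cong[OF refl], rule sum.cong[OF refl])
      fix i j assume "i \<in> {..<n}" "j \<in> {..<n}"
      hence "A $$ (j,i) = A $$ (i,j)" using sym A
        by (metis carrier_matD index_transpose_mat(1) lessThan_iff)
      thus "v $ j * complex_of_real (A $$ (j, i)) * cnj (v $ i) =
            cnj (v $ i) * complex_of_real (A $$ (i, j)) * v $ j" by (simp add: algebra_simps)
    qed
    finally show ?thesis .
  qed
  have Nreal: "N = complex_of_real (\<Sum>i<n. (cmod (v $ i))^2)"
    unfolding N_def of_real_sum by (rule sum.cong, simp, simp add: complex_eq_iff cmod_def power2_eq_square)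
  have Npos: "(\<Sum>i<n. (cmod (v $ i))^2) > 0"
  proof -
    from v(1,2) obtain k where k: "k < n" "v $ k \<noteq> 0"
      by (metis carrier_vecD eq_vecI index_zero_vec(1) index_zero_vec(2))
    have "(\<Sum>i<n. (cmod (v $ i))^2) \<ge> (cmod (v $ k))^2"
      by (rule member_le_sum) (use k in auto)
    moreover have "(cmod (v $ k))^2 > 0" using k by simp
    ultimately show ?thesis by linarith
  qed
  have "Im s = 0" using cs by (metis Im_complex_of_real Reals_cnj_iff complex_is_Real_iff)
  moreover have "Im s = Im z * (\<Sum>i<n. (cmod (v $ i))^2)" unfolding sN Nreal by simp
  ultimately have "Im z = 0" using Npos by simp
  hence zr: "z = complex_of_real (Re z)" by (simp add: complex_eq_iff)
  have "poly (char_poly A) (Re z) = 0"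
    using z zr cp of_real_hom.poly_map_poly by (metis of_real_eq_0_iff)
  hence "eigenvalue A (Re z)" using eigenvalue_root_char_poly[OF A] by simp
  thus ?thesis unfolding eigenvalue_def eigenvector_def using A by auto
qed


lemma conj_real_vec[simp]: "conjugate (w :: real vec) = w"
  by (rule eq_vecI, auto simp: conjugate_vec_def conjugate_real_def)

lemma orthonormal_ext:
  fixes v :: "real vec"
  assumes v: "v \<in> carrier_vec n" and v0: "v \<noteq> 0\<^sub>v n"
  shows "\<exists>U. U \<in> carrier_mat n n \<and> transpose_mat U * U = 1\<^sub>m n \<and> (\<exists>c. col U 0 = c \<cdot>\<^sub>v v)"
proof -
  have n: "n > 0"
  proof (rule ccontr)
    assume "\<not> n > 0" hence "n = 0" by simp
    hence "v = 0\<^sub>v n" using v by (intro eq_vecI) auto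
    thus False using v0 by simp
  qed
  define b where "b = basis_completion v"
  have b: "set b \<subseteq> carrier_vec n" "distinct b" "\<not> module.lin_dep class_ring (module_vec TYPE(real) n) (set b)"
    "length b = n" "hd b = v"
    using vec_space.basis_completion[OF v v0] unfolding b_def by auto
  define ws where "ws = gram_schmidt n b"
  have ws: "corthogonal ws" "set ws \<subseteq> carrier_vec n" "length ws = n"
    using cof_vec_space.gram_schmidt_result[OF b(1,2,3) ws_def] b(4) by auto
  from b(4,5) n obtain vs where bv: "b = v # vs" by (cases b, auto)
  have hdws: "hd ws = v" unfolding ws_def bv using cof_vec_space.gram_schmidt_hd[OF v] by simp
  have ws0: "ws ! 0 = v" using hdws n ws(3) by (metis hd_conv_nth list.size(3) not_less0 n)
  define us where "us = map (\<lambda>w. (1 / sqrt (w \<bullet> w)) \<cdot>\<^sub>v w) ws"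
  have len: "length us = n" unfolding us_def using ws by simp
  have wsn: "ws ! i \<in> carrier_vec n" if "i < n" for i using ws that by auto
  have usn: "us ! i \<in> carrier_vec n" if "i < n" for i using wsn[OF that] that ws(3) unfolding us_def by simp
  have wsorth: "ws ! i \<bullet> ws ! j = 0 \<longleftrightarrow> i \<noteq> j" if "i < n" "j < n" for i j
    using corthogonalD[OF ws(1)] that ws(3) by simp
  have wspos: "ws ! i \<bullet> ws ! i > 0" if "i < n" for i
  proof -
    have "ws ! i \<bullet> ws ! i \<noteq> 0" using wsorth[OF that that] by simp
    moreover have "ws ! i \<bullet> ws ! i \<ge> 0" unfolding scalar_prod_def
      by (rule sum_nonneg) simp
    ultimately show ?thesis by simp
  qed
  have usdot: "us ! i \<bullet> us ! j = (if i = j then 1 else 0)" if ij: "i < n" "j < n" for i j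
  proof -
    have "us ! i \<bullet> us ! j = (1 / sqrt (ws!i \<bullet> ws!i)) * (1 / sqrt (ws!j \<bullet> ws!j)) * (ws ! i \<bullet> ws ! j)"
      unfolding us_def using ij ws(3) wsn[OF ij(1)] wsn[OF ij(2)] by simp
    also have "\<dots> = (if i = j then 1 else 0)"
    proof (cases "i = j")
      case True
      have p: "ws ! i \<bullet> ws ! i > 0" using wspos ij by simp
      have "(1 / sqrt (ws!i \<bullet> ws!i)) * (1 / sqrt (ws!i \<bullet> ws!i)) = 1 / (ws!i \<bullet> ws!i)"
        using p by (simp add: real_sqrt_mult[symmetric])
      thus ?thesis using True p by simp
    next
      case False thus ?thesis using wsorth ij by simp
    qed
    finally show ?thesis .
  qed
  define U where "U = mat_of_cols n us"
  have U: "U \<in> carrier_mat n n" unfolding U_def using len by (metis mat_of_cols_carrier(1))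
  have colU: "col U i = us ! i" if "i < n" for i unfolding U_def using that len usn by simp
  have "transpose_mat U * U = 1\<^sub>m n"
  proof (rule eq_matI)
    fix i j assume "i < dim_row (1\<^sub>m n)" "j < dim_col (1\<^sub>m n)"
    hence ij: "i < n" "j < n" by auto
    show "(transpose_mat U * U) $$ (i, j) = 1\<^sub>m n $$ (i, j)"
      using ij U by (simp add: colU usdot)
  qed (use U in auto)
  moreover have "col U 0 = (1 / sqrt (v \<bullet> v)) \<cdot>\<^sub>v v"
    using colU[OF n] unfolding us_def using ws0 n ws(3) by simp
  ultimately show ?thesis using U by blast
qed


definition dmat :: "nat \<Rightarrow> (nat \<Rightarrow> real) \<Rightarrow> real mat" where
  "dmat n d = mat n n (\<lambda>(i,j). if i = j then d i else 0)"

lemma dmat_carrier[simp]: "dmat n d \<in> carrier_mat n n" unfolding dmat_def by simp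
lemma dmat_dim[simp]: "dim_row (dmat n d) = n" "dim_col (dmat n d) = n" unfolding dmat_def by simp_all
lemma dmat_index[simp]: "i < n \<Longrightarrow> j < n \<Longrightarrow> dmat n d $$ (i,j) = (if i = j then d i else 0)"
  unfolding dmat_def by simp

lemma dmat_Suc: "dmat (Suc m) d = four_block_mat (mat 1 1 (\<lambda>_. d 0)) (0\<^sub>m 1 m) (0\<^sub>m m 1) (dmat m (\<lambda>i. d (Suc i)))"
  by (rule eq_matI, auto simp: dmat_def)

lemma spectral:
  fixes A :: "real mat"
  assumes "A \<in> carrier_mat n n" "transpose_mat A = A"
  shows "\<exists>U d. U \<in> carrier_mat n n \<and> transpose_mat U * U = 1\<^sub>m n \<and> A * U = U * dmat n d"
  using assms
proof (induction n arbitrary: A)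
  case 0
  show ?case
    by (rule exI[of _ "1\<^sub>m 0"], rule exI[of _ "\<lambda>_. 0"], use 0 in \<open>auto intro!: eq_matI simp: dmat_def\<close>)
next
  case (Suc m)
  note A = Suc.prems(1) and sym = Suc.prems(2)
  obtain e v where v: "v \<in> carrier_vec (Suc m)" "v \<noteq> 0\<^sub>v (Suc m)" "A *\<^sub>v v = e \<cdot>\<^sub>v v"
    using sym_real_eigen[OF A sym] by auto
  obtain U0 c where U0: "U0 \<in> carrier_mat (Suc m) (Suc m)" "transpose_mat U0 * U0 = 1\<^sub>m (Suc m)"
    "col U0 0 = c \<cdot>\<^sub>v v"
    using orthonormal_ext[OF v(1,2)] by blast
  have tU0: "transpose_mat U0 \<in> carrier_mat (Suc m) (Suc m)" using U0 by simp
  have U0t: "U0 * transpose_mat U0 = 1\<^sub>m (Suc m)"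
    using mat_mult_left_right_inverse[OF tU0 U0(1) U0(2)] .
  define u where "u = col U0 0"
  have u: "u \<in> carrier_vec (Suc m)" unfolding u_def using U0(1) by (metis carrier_matD(1) carrier_vec_dim_vec col_dim)
  have Au: "A *\<^sub>v u = e \<cdot>\<^sub>v u" unfolding u_def U0(3) using v A
    by (simp add: mult_mat_vec v(3) smult_smult_assoc mult.commute)
  define B where "B = transpose_mat U0 * A * U0"
  have B: "B \<in> carrier_mat (Suc m) (Suc m)" unfolding B_def using U0 A by simp
  have Bsym: "transpose_mat B = B"
  proof -
    have 1: "transpose_mat U0 * A \<in> carrier_mat (Suc m) (Suc m)" using tU0 A by simp
    have "transpose_mat B = transpose_mat U0 * transpose_mat (transpose_mat U0 * A)"
      unfolding B_def by (rule transpose_mult[OF 1 U0(1)])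
    also have "transpose_mat (transpose_mat U0 * A) = transpose_mat A * U0"
      using transpose_mult[OF tU0 A] by simp
    also have "transpose_mat U0 * (transpose_mat A * U0) = B"
      unfolding B_def sym using tU0 A U0(1) by simp
    finally show ?thesis .
  qed
  have Bcol: "B $$ (i, 0) = (if i = 0 then e else 0)" if i: "i < Suc m" for i
  proof -
    have "B $$ (i, 0) = (transpose_mat U0 * (A * U0)) $$ (i,0)"
      unfolding B_def using U0 A by (simp add: assoc_mult_mat[of _ "Suc m" "Suc m"])
    also have "\<dots> = row (transpose_mat U0) i \<bullet> col (A * U0) 0"
      by (rule index_mult_mat(1)) (use i U0(1) A in auto)
    also have "row (transpose_mat U0) i \<bullet> col (A * U0) 0 = col U0 i \<bullet> (A *\<^sub>v u)"
    proof -
      have "row (transpose_mat U0) i = col U0 i" using i U0(1) by simp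
      moreover have "col (A * U0) 0 = A *\<^sub>v u" unfolding u_def by (rule col_mult2[OF A U0(1)]) simp
      ultimately show ?thesis by simp
    qed
    also have "\<dots> = e * (col U0 i \<bullet> u)" using Au u U0 i by simp
    also have "col U0 i \<bullet> u = (transpose_mat U0 * U0) $$ (i, 0)" unfolding u_def using i U0(1) by simp
    finally have 1: "B $$ (i, 0) = e * (transpose_mat U0 * U0) $$ (i, 0)" .
    have 2: "(transpose_mat U0 * U0) $$ (i, 0) = (if i = 0 then 1 else 0)" unfolding U0(2) using i by simp
    show ?thesis unfolding 1 2 by simp
  qed
  have Brow: "B $$ (0, j) = (if j = 0 then e else 0)" if j: "j < Suc m" for j
  proof -
    have "B $$ (0, j) = transpose_mat B $$ (j, 0)" using B j by simp
    thus ?thesis using Bsym Bcol[OF j] by simp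
  qed
  define B' where "B' = mat m m (\<lambda>(i,j). B $$ (Suc i, Suc j))"
  have B': "B' \<in> carrier_mat m m" unfolding B'_def by simp
  have B'sym: "transpose_mat B' = B'"
  proof (rule eq_matI)
    fix i j assume "i < dim_row B'" "j < dim_col B'"
    hence ij: "i < m" "j < m" unfolding B'_def by auto
    have "B $$ (Suc j, Suc i) = transpose_mat B $$ (Suc i, Suc j)" using B ij by simp
    thus "transpose_mat B' $$ (i, j) = B' $$ (i, j)" using ij Bsym unfolding B'_def by simp
  qed (auto simp: B'_def)
  obtain U' d' where U': "U' \<in> carrier_mat m m" "transpose_mat U' * U' = 1\<^sub>m m" "B' * U' = U' * dmat m d'"
    using Suc.IH[OF B' B'sym] by auto
  define E where "E = mat 1 1 (\<lambda>_. e)"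
  have Bblock: "B = four_block_mat E (0\<^sub>m 1 m) (0\<^sub>m m 1) B'"
  proof (rule eq_matI)
    fix i j assume "i < dim_row (four_block_mat E (0\<^sub>m 1 m) (0\<^sub>m m 1) B')"
      "j < dim_col (four_block_mat E (0\<^sub>m 1 m) (0\<^sub>m m 1) B')"
    hence ij: "i < Suc m" "j < Suc m" using B' unfolding E_def by auto
    show "B $$ (i, j) = four_block_mat E (0\<^sub>m 1 m) (0\<^sub>m m 1) B' $$ (i, j)"
      using ij B' Bcol Brow unfolding E_def B'_def
      by (cases i; cases j; auto)
  qed (use B B' in \<open>auto simp: E_def\<close>)
  define F where "F = four_block_mat (1\<^sub>m 1) (0\<^sub>m 1 m) (0\<^sub>m m 1) U'"
  have F: "F \<in> carrier_mat (Suc m) (Suc m)" unfolding F_def using U' by auto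
  define U where "U = U0 * F"
  define d where "d = (\<lambda>i. if i = 0 then e else d' (i - 1))"
  have U: "U \<in> carrier_mat (Suc m) (Suc m)" unfolding U_def using U0 F by simp
  have FtF: "transpose_mat F * F = 1\<^sub>m (Suc m)"
  proof -
    have "transpose_mat F = four_block_mat (1\<^sub>m 1) (0\<^sub>m 1 m) (0\<^sub>m m 1) (transpose_mat U')"
      unfolding F_def using U' by (simp add: transpose_four_block_mat[of _ 1 1 _ m _ m])
    hence "transpose_mat F * F = four_block_mat (1\<^sub>m 1) (0\<^sub>m 1 m) (0\<^sub>m m 1) (transpose_mat U' * U')"
      unfolding F_def using U' by (simp add: mult_four_block_mat[of _ 1 1 _ m _ m _ _ 1 _ m])
    thus ?thesis using U'(2) by simp
  qed
  have UtU: "transpose_mat U * U = 1\<^sub>m (Suc m)"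
  proof -
    have tF: "transpose_mat F \<in> carrier_mat (Suc m) (Suc m)" using F by simp
    have "transpose_mat U = transpose_mat F * transpose_mat U0"
      unfolding U_def by (rule transpose_mult[OF U0(1) F])
    hence "transpose_mat U * U = (transpose_mat F * transpose_mat U0) * (U0 * F)" unfolding U_def by simp
    also have "\<dots> = transpose_mat F * (transpose_mat U0 * (U0 * F))"
    proof -
      have "U0 * F \<in> carrier_mat (Suc m) (Suc m)" using U0(1) F by simp
      thus ?thesis using assoc_mult_mat[OF tF tU0] by blast
    qed
    also have "transpose_mat U0 * (U0 * F) = (transpose_mat U0 * U0) * F"
      by (rule assoc_mult_mat[OF tU0 U0(1) F, symmetric])
    also have "(transpose_mat U0 * U0) * F = F" unfolding U0(2) using F by simp
    finally show ?thesis using FtF by simp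
  qed
  have "A * U = U0 * (B * F)"
  proof -
    have "A * U = (U0 * transpose_mat U0) * A * (U0 * F)" unfolding U_def U0t using A by simp
    also have "\<dots> = U0 * (transpose_mat U0 * A * U0 * F)"
    proof -
      have c1: "transpose_mat U0 * A \<in> carrier_mat (Suc m) (Suc m)" using tU0 A by simp
      have c2: "transpose_mat U0 * A * U0 \<in> carrier_mat (Suc m) (Suc m)" using c1 U0(1) by simp
      have "(U0 * transpose_mat U0) * A = U0 * (transpose_mat U0 * A)"
        by (rule assoc_mult_mat[OF U0(1) tU0 A])
      moreover have "U0 * (transpose_mat U0 * A) * (U0 * F) = U0 * ((transpose_mat U0 * A) * (U0 * F))"
        using assoc_mult_mat[OF U0(1) c1] U0(1) F by (meson mult_carrier_mat)
      moreover have "(transpose_mat U0 * A) * (U0 * F) = (transpose_mat U0 * A * U0) * F"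
        using assoc_mult_mat[OF c1 U0(1) F] by simp
      ultimately show ?thesis by simp
    qed
    finally show ?thesis unfolding B_def .
  qed
  also have "B * F = four_block_mat E (0\<^sub>m 1 m) (0\<^sub>m m 1) (B' * U')"
    unfolding Bblock F_def using B' U' by (simp add: mult_four_block_mat[of _ 1 1 _ m _ m _ _ 1 _ m] E_def)
  also have "\<dots> = F * dmat (Suc m) d"
  proof -
    have "dmat (Suc m) d = four_block_mat E (0\<^sub>m 1 m) (0\<^sub>m m 1) (dmat m d')"
      unfolding dmat_Suc d_def E_def by simp
    hence "F * dmat (Suc m) d = four_block_mat E (0\<^sub>m 1 m) (0\<^sub>m m 1) (U' * dmat m d')"
      unfolding F_def using U' by (simp add: mult_four_block_mat[of _ 1 1 _ m _ m _ _ 1 _ m] E_def)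
    thus ?thesis using U'(3) by simp
  qed
  also have "U0 * (F * dmat (Suc m) d) = U * dmat (Suc m) d"
    unfolding U_def using assoc_mult_mat[OF U0(1) F dmat_carrier[of "Suc m" d]] by simp
  finally show ?case using U UtU by blast
qed


lemma dmat_mult_vec: "y \<in> carrier_vec n \<Longrightarrow> i < n \<Longrightarrow> (dmat n d *\<^sub>v y) $ i = d i * y $ i"
proof -
  assume y: "y \<in> carrier_vec n" and i: "i < n"
  have "(dmat n d *\<^sub>v y) $ i = (\<Sum>k\<in>{0..<n}. (if i = k then d i else 0) * y $ k)"
    using y i by (simp add: scalar_prod_def row_def)
  also have "\<dots> = (\<Sum>k\<in>{0..<n}. (if i = k then d i * y $ k else 0))"
    by (rule sum.cong) auto
  also have "\<dots> = d i * y $ i"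
    using i by (simp add: sum.delta')
  finally show ?thesis .
qed

lemma quad_dmat: assumes y: "y \<in> carrier_vec n"
  shows "y \<bullet> (dmat n d *\<^sub>v y) = (\<Sum>i<n. d i * (y $ i)^2)"
proof -
  have "y \<bullet> (dmat n d *\<^sub>v y) = (\<Sum>i\<in>{0..<n}. (dmat n d *\<^sub>v y) $ i * y $ i)"
    unfolding scalar_prod_def using y by (simp add: mult.commute)
  also have "\<dots> = (\<Sum>i\<in>{0..<n}. d i * (y $ i)^2)"
    by (rule sum.cong, simp, simp del: index_mult_mat_vec add: dmat_mult_vec[OF y] power2_eq_square)
  finally show ?thesis by (simp add: lessThan_atLeast0)
qed

lemma sylvester_le:
  fixes A U P :: "real mat" and d l :: "nat \<Rightarrow> real" and s :: real
  assumes U: "U \<in> carrier_mat n n" and UtU: "transpose_mat U * U = 1\<^sub>m n"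
    and AU: "A * U = U * dmat n d"
    and P: "P \<in> carrier_mat n n" and AP: "A = P * dmat n l * transpose_mat P"
  shows "card {i. i < n \<and> s * d i > 0} \<le> card {i. i < n \<and> s * l i > 0}"
proof (rule ccontr)
  define I where "I = {i. i < n \<and> s * d i > 0}"
  define J where "J = {i. i < n \<and> s * l i > 0}"
  assume "\<not> card I \<le> card J"
  hence qp: "card J < card I" unfolding I_def J_def by simp
  define p where "p = card I"
  define q where "q = card J"
  have I: "I \<subseteq> {0..<n}" "finite I" unfolding I_def by auto
  have J: "J \<subseteq> {0..<n}" "finite J" unfolding J_def by auto
  have pn: "p \<le> n" unfolding p_def using I card_mono[of "{0..<n}" I] by simp
  define js where "js = sorted_list_of_set J"
  define ks where "ks = sorted_list_of_set ({0..<n} - I)"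
  have ljs: "length js = q" unfolding js_def q_def by simp
  have lks: "length ks = n - p" unfolding ks_def p_def using I by (simp add: card_Diff_subset)
  have sjs: "set js = J" unfolding js_def using J by simp
  have sks: "set ks = {0..<n} - I" unfolding ks_def by simp
  define M where "M = transpose_mat P * U"
  have M: "M \<in> carrier_mat n n" unfolding M_def using P U by simp
  define rowf where "rowf = (\<lambda>i. if i < q then row M (js ! i)
      else if i < q + (n - p) then unit_vec n (ks ! (i - q)) else 0\<^sub>v n)"
  have rowf_carr: "rowf i \<in> carrier_vec n" for i unfolding rowf_def using M by auto
  define N where "N = mat\<^sub>r n n (\<lambda>i. if i = n - 1 then 0\<^sub>v n else rowf i)"
  have N: "N \<in> carrier_mat n n" unfolding N_def by simp
  have n0: "n > 0" using qp pn unfolding p_def q_def by simp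
  have "det N = 0" unfolding N_def
    by (rule det_row_0) (use n0 rowf_carr in auto)
  then obtain y where y: "y \<in> carrier_vec n" "y \<noteq> 0\<^sub>v n" "N *\<^sub>v y = 0\<^sub>v n"
    using det_0_iff_vec_prod_zero[OF N] by auto
  have rowc: "rowf i \<bullet> y = 0" if i: "i < q + (n - p)" for i
  proof -
    have bound: "q + (n - p) < n" using qp pn unfolding p_def q_def by linarith
    have i': "i < n" "i \<noteq> n - 1" using i bound by auto
    have "(N *\<^sub>v y) $ i = 0" using y(3) i' by simp
    moreover have "row N i = rowf i" unfolding N_def using i' rowf_carr by simp
    ultimately show ?thesis using i' N by simp
  qed
  have yI: "y $ i = 0" if "i < n" "i \<notin> I" for i
  proof -
    have "i \<in> set ks" using that sks by simp
    then obtain r where r: "r < n - p" "ks ! r = i" using lks by (metis in_set_conv_nth)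
    have "rowf (q + r) \<bullet> y = 0" using rowc r by simp
    moreover have "rowf (q + r) = unit_vec n i" unfolding rowf_def using r pn by auto
    ultimately show ?thesis using y(1) that by simp
  qed
  define z where "z = M *\<^sub>v y"
  have z: "z \<in> carrier_vec n" unfolding z_def using M by (metis carrier_matD(1) mult_mat_vec_carrier y(1))
  have zJ: "z $ j = 0" if "j \<in> J" for j
  proof -
    have "j \<in> set js" using that sjs by simp
    then obtain r where r: "r < q" "js ! r = j" using ljs by (metis in_set_conv_nth)
    have "rowf r \<bullet> y = 0" using rowc r by simp
    moreover have "rowf r = row M j" unfolding rowf_def using r by simp
    ultimately show ?thesis unfolding z_def using M that J by auto
  qed
  define x where "x = U *\<^sub>v y"
  have x: "x \<in> carrier_vec n" unfolding x_def using U by (metis mult_mat_vec_carrier y(1))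
  have tU: "transpose_mat U \<in> carrier_mat n n" using U by simp
  have tP: "transpose_mat P \<in> carrier_mat n n" using P by simp
  have Q1: "x \<bullet> (A *\<^sub>v x) = (\<Sum>i<n. d i * (y $ i)^2)"
  proof -
    have Ac: "A \<in> carrier_mat n n" unfolding AP using P by (meson mult_carrier_mat dmat_carrier transpose_carrier_mat)
    have "A *\<^sub>v x = (A * U) *\<^sub>v y" unfolding x_def using assoc_mult_mat_vec[OF Ac U y(1)] by simp
    also have "\<dots> = U *\<^sub>v (dmat n d *\<^sub>v y)" unfolding AU using assoc_mult_mat_vec[OF U dmat_carrier y(1)] by simp
    finally have "x \<bullet> (A *\<^sub>v x) = x \<bullet> (U *\<^sub>v (dmat n d *\<^sub>v y))" by simp
    also have "\<dots> = (transpose_mat U *\<^sub>v x) \<bullet> (dmat n d *\<^sub>v y)"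
      using transpose_vec_mult_scalar[OF U mult_mat_vec_carrier[OF dmat_carrier y(1)] x] by simp
    also have "transpose_mat U *\<^sub>v x = y"
      unfolding x_def using assoc_mult_mat_vec[OF tU U y(1)] UtU y(1) by simp
    finally show ?thesis using quad_dmat[OF y(1)] by simp
  qed
  have Q2: "x \<bullet> (A *\<^sub>v x) = (\<Sum>i<n. l i * (z $ i)^2)"
  proof -
    have zz: "z = transpose_mat P *\<^sub>v x" unfolding z_def M_def x_def using assoc_mult_mat_vec[OF tP U y(1)] by simp
    have PD: "P * dmat n l \<in> carrier_mat n n" using P by simp
    have "A *\<^sub>v x = P *\<^sub>v (dmat n l *\<^sub>v z)" unfolding AP zz
      using assoc_mult_mat_vec[OF PD tP x] assoc_mult_mat_vec[OF P dmat_carrier, of "transpose_mat P *\<^sub>v x" l] tP x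
      by (metis mult_mat_vec_carrier)
    hence "x \<bullet> (A *\<^sub>v x) = (transpose_mat P *\<^sub>v x) \<bullet> (dmat n l *\<^sub>v z)"
      using transpose_vec_mult_scalar[OF P mult_mat_vec_carrier[OF dmat_carrier z] x] by simp
    thus ?thesis using quad_dmat[OF z] zz by simp
  qed
  have pos: "s * (\<Sum>i<n. d i * (y $ i)^2) > 0"
  proof -
    from y(1,2) obtain k where k: "k < n" "y $ k \<noteq> 0"
      by (metis carrier_vecD eq_vecI index_zero_vec(1) index_zero_vec(2))
    have kI: "k \<in> I" using yI k by blast
    have "s * (\<Sum>i<n. d i * (y $ i)^2) = (\<Sum>i<n. s * d i * (y $ i)^2)"
      by (simp add: sum_distrib_left mult.assoc)
    also have "\<dots> \<ge> s * d k * (y $ k)^2"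
    proof (rule member_le_sum)
      fix i assume "i \<in> {..<n} - {k}"
      show "0 \<le> s * d i * (y $ i)^2"
      proof (cases "i \<in> I")
        case True thus ?thesis unfolding I_def by simp
      next
        case False thus ?thesis using yI \<open>i \<in> {..<n} - {k}\<close> by simp
      qed
    qed (use k in auto)
    moreover have "s * d k * (y $ k)^2 > 0" using kI k unfolding I_def by simp
    ultimately show ?thesis by linarith
  qed
  have neg: "s * (\<Sum>i<n. l i * (z $ i)^2) \<le> 0"
  proof -
    have "s * (\<Sum>i<n. l i * (z $ i)^2) = (\<Sum>i<n. s * l i * (z $ i)^2)"
      by (simp add: sum_distrib_left mult.assoc)
    also have "\<dots> \<le> 0"
    proof (rule sum_nonpos)
      fix i assume i: "i \<in> {..<n}"
      show "s * l i * (z $ i)^2 \<le> 0"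
      proof (cases "i \<in> J")
        case True thus ?thesis using zJ by simp
      next
        case False hence "s * l i \<le> 0" using i unfolding J_def by auto
        thus ?thesis by (simp add: mult_nonpos_nonneg)
      qed
    qed
    finally show ?thesis .
  qed
  show False using pos neg Q1 Q2 by simp
qed


lemma dmat_ut: "upper_triangular (dmat n d)"
  unfolding upper_triangular_def by (simp add: dmat_def)

lemma dmat_diag: "diag_mat (dmat n d) = map d [0..<n]"
  unfolding diag_mat_def by (auto simp: dmat_def)

lemma transpose_dmat[simp]: "transpose_mat (dmat n d) = dmat n d"
  by (rule eq_matI, auto simp: dmat_def)

theorem inertia_congruence:
  fixes A P :: "real mat" and l :: "nat \<Rightarrow> real"
  assumes P: "P \<in> carrier_mat n n" and detP: "det P \<noteq> 0"
    and l0: "\<forall>i<n. l i \<noteq> 0" and AP: "A = P * dmat n l * transpose_mat P"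
  shows "pos_inertia A = card {i. i < n \<and> l i > 0} \<and> neg_inertia A = card {i. i < n \<and> l i < 0}
    \<and> zero_inertia A = 0"
proof -
  have tP: "transpose_mat P \<in> carrier_mat n n" using P by simp
  have PD: "P * dmat n l \<in> carrier_mat n n" using P by simp
  have A: "A \<in> carrier_mat n n" unfolding AP by (rule mult_carrier_mat[OF PD tP])
  have sym: "transpose_mat A = A"
  proof -
    have "transpose_mat A = transpose_mat (transpose_mat P) * transpose_mat (P * dmat n l)"
      unfolding AP by (rule transpose_mult[OF PD tP])
    also have "transpose_mat (P * dmat n l) = dmat n l * transpose_mat P"
      using transpose_mult[OF P dmat_carrier] by simp
    also have "transpose_mat (transpose_mat P) * (dmat n l * transpose_mat P) = A"
      unfolding AP using assoc_mult_mat[OF P dmat_carrier tP] by simp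
    finally show ?thesis .
  qed
  obtain U d where U: "U \<in> carrier_mat n n" "transpose_mat U * U = 1\<^sub>m n" "A * U = U * dmat n d"
    using spectral[OF A sym] by blast
  have tU: "transpose_mat U \<in> carrier_mat n n" using U by simp
  have UUt: "U * transpose_mat U = 1\<^sub>m n" using mat_mult_left_right_inverse[OF tU U(1) U(2)] .
  have AUD: "A = U * dmat n d * transpose_mat U"
  proof -
    have "A = A * (U * transpose_mat U)" unfolding UUt using A by simp
    also have "\<dots> = (A * U) * transpose_mat U" using assoc_mult_mat[OF A U(1) tU] by simp
    finally show ?thesis unfolding U(3) .
  qed
  have "similar_mat_wit A (dmat n d) U (transpose_mat U)"
    unfolding similar_mat_wit_def Let_def using A U(1) tU UUt U(2) AUD by auto
  hence "char_poly A = char_poly (dmat n d)" using char_poly_similar unfolding similar_mat_def by blast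
  also have "\<dots> = (\<Prod>b\<leftarrow>map d [0..<n]. [:- b, 1:])"
    using char_poly_upper_triangular[OF dmat_carrier dmat_ut] dmat_diag by simp
  finally have cp: "char_poly A = (\<Prod>b\<leftarrow>map d [0..<n]. [:- b, 1:])" .
  note inr = inertia_diag[OF cp]
  have le1: "card {i. i < n \<and> d i > 0} \<le> card {i. i < n \<and> l i > 0}"
    using sylvester_le[OF U(1) U(2) U(3) P AP, of 1] by simp
  have le2: "card {i. i < n \<and> d i < 0} \<le> card {i. i < n \<and> l i < 0}"
    using sylvester_le[OF U(1) U(2) U(3) P AP, of "-1"] by simp
  have z: "{i. i < n \<and> d i = 0} = {}"
  proof (rule ccontr)
    assume "{i. i < n \<and> d i = 0} \<noteq> {}"
    then obtain k where k: "k < n" "d k = 0" by auto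
    define x where "x = col U k"
    have x: "x \<in> carrier_vec n" unfolding x_def using U(1) by (metis carrier_matD(1) carrier_vec_dim_vec col_dim)
    have "x \<bullet> x = (transpose_mat U * U) $$ (k,k)" unfolding x_def using k U(1) by simp
    hence xx: "x \<bullet> x = 1" unfolding U(2) using k by simp
    hence x0: "x \<noteq> 0\<^sub>v n" by auto
    have "A *\<^sub>v x = col (A * U) k" unfolding x_def by (rule col_mult2[OF A U(1) k(1), symmetric])
    also have "\<dots> = col (U * dmat n d) k" unfolding U(3) ..
    also have "\<dots> = U *\<^sub>v col (dmat n d) k" using col_mult2[OF U(1) dmat_carrier, of k d] k by simp
    also have "col (dmat n d) k = 0\<^sub>v n" using k by (intro eq_vecI, auto simp: dmat_def)
    also have "U *\<^sub>v 0\<^sub>v n = 0\<^sub>v n" using U(1) by (intro eq_vecI, auto simp: scalar_prod_def)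
    finally have "A *\<^sub>v x = 0\<^sub>v n" .
    hence "det A = 0" using det_0_iff_vec_prod_zero[OF A] x x0 by blast
    moreover have "det A = det P * prod_list (map l [0..<n]) * det P"
    proof -
      have "det A = det (P * dmat n l) * det (transpose_mat P)" unfolding AP by (rule det_mult[OF PD tP])
      also have "det (P * dmat n l) = det P * det (dmat n l)" by (rule det_mult[OF P dmat_carrier])
      also have "det (dmat n l) = prod_list (map l [0..<n])"
        using det_upper_triangular[OF dmat_ut dmat_carrier] dmat_diag by simp
      also have "det (transpose_mat P) = det P" by (rule det_transpose[OF P])
      finally show ?thesis .
    qed
    moreover have "prod_list (map l [0..<n]) \<noteq> 0" using l0 by (auto simp: prod_list_zero_iff)
    ultimately show False using detP by simp
  qed
  have tot_d: "card {i. i < n \<and> d i > 0} + card {i. i < n \<and> d i < 0} + card {i. i < n \<and> d i = 0} = n"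
  proof -
    have "{i. i < n \<and> d i > 0} \<union> {i. i < n \<and> d i < 0} \<union> {i. i < n \<and> d i = 0} = {0..<n}" by auto
    moreover have "card ({i. i < n \<and> d i > 0} \<union> {i. i < n \<and> d i < 0} \<union> {i. i < n \<and> d i = 0})
      = card {i. i < n \<and> d i > 0} + card {i. i < n \<and> d i < 0} + card {i. i < n \<and> d i = 0}"
      by (subst card_Un_disjoint, auto)+
    ultimately show ?thesis by simp
  qed
  have tot_l: "card {i. i < n \<and> l i > 0} + card {i. i < n \<and> l i < 0} = n"
  proof -
    have "{i. i < n \<and> l i > 0} \<union> {i. i < n \<and> l i < 0} = {0..<n}" using l0 by force
    moreover have "card ({i. i < n \<and> l i > 0} \<union> {i. i < n \<and> l i < 0})
      = card {i. i < n \<and> l i > 0} + card {i. i < n \<and> l i < 0}"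
      by (subst card_Un_disjoint, auto)
    ultimately show ?thesis by simp
  qed
  have e1: "card {i. i < n \<and> d i > 0} = card {i. i < n \<and> l i > 0}"
    using le1 le2 tot_d tot_l z by simp
  have e2: "card {i. i < n \<and> d i < 0} = card {i. i < n \<and> l i < 0}"
    using le1 le2 tot_d tot_l z by simp
  show ?thesis using inr e1 e2 z by simp
qed


function lam :: "nat set \<Rightarrow> nat \<Rightarrow> real" where
  "lam S x = (if x = 0 then 0 else 1 / real x - (\<Sum>y\<in>{y\<in>S. y dvd x \<and> y < x}. lam S y))"
  by auto
termination by (relation "measure snd") auto

declare lam.simps[simp del]

definition Fd :: "nat set \<Rightarrow> nat set \<Rightarrow> real" where
  "Fd S C = (\<Sum>y\<in>{y\<in>S. \<exists>c\<in>C. y dvd c}. lam S y)"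

lemma sum_lam_div:
  assumes fin: "finite S" and x: "x \<in> S" "x > 0"
  shows "(\<Sum>y\<in>{y\<in>S. y dvd x}. lam S y) = 1 / real x"
proof -
  have eq: "{y\<in>S. y dvd x} = insert x {y\<in>S. y dvd x \<and> y < x}"
    using x by (auto dest: dvd_imp_le)
  have "(\<Sum>y\<in>{y\<in>S. y dvd x}. lam S y) = lam S x + (\<Sum>y\<in>{y\<in>S. y dvd x \<and> y < x}. lam S y)"
    unfolding eq by (subst sum.insert) (use fin in auto)
  also have "\<dots> = 1 / real x" by (subst lam.simps) (use x in simp)
  finally show ?thesis .
qed

lemma Fd_single: "finite S \<Longrightarrow> c \<in> S \<Longrightarrow> c > 0 \<Longrightarrow> Fd S {c} = 1 / real c"
  unfolding Fd_def using sum_lam_div by simp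

lemma Fd_empty[simp]: "Fd S {} = 0" unfolding Fd_def by simp

lemma Fd_insert:
  assumes fin: "finite S" and gc: "gcd_closed S" and c: "c \<in> S" "c > 0" and C: "C \<subseteq> S"
  shows "Fd S (insert c C) = Fd S C + 1 / real c - Fd S ((\<lambda>a. gcd a c) ` C)"
proof -
  define DC where "DC = {y\<in>S. \<exists>a\<in>C. y dvd a}"
  define Dc where "Dc = {y\<in>S. y dvd c}"
  have U: "{y\<in>S. \<exists>a\<in>insert c C. y dvd a} = DC \<union> Dc" unfolding DC_def Dc_def by auto
  have I: "DC \<inter> Dc = {y\<in>S. \<exists>a\<in>(\<lambda>a. gcd a c) ` C. y dvd a}" unfolding DC_def Dc_def by auto
  have f: "finite DC" "finite Dc" unfolding DC_def Dc_def using fin by auto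
  have "Fd S (insert c C) + Fd S ((\<lambda>a. gcd a c) ` C) = sum (lam S) DC + sum (lam S) Dc"
    unfolding Fd_def U I[symmetric] by (rule sum.union_inter[OF f])
  moreover have "sum (lam S) Dc = 1 / real c" unfolding Dc_def using sum_lam_div[OF fin c] .
  moreover have "sum (lam S) DC = Fd S C" unfolding Fd_def DC_def ..
  ultimately show ?thesis by simp
qed

lemma Fd_chain:
  assumes fin: "finite S" and G: "G \<subseteq> S" "finite G" "G \<noteq> {}" and ch: "dvd_chain G" and pos: "0 \<notin> G"
  shows "Fd S G = 1 / real (Max G)"
proof -
  define h where "h = Max G"
  have h: "h \<in> G" unfolding h_def using G by simp
  have all: "g dvd h" if "g \<in> G" for g
  proof -
    have "g \<le> h" unfolding h_def using G that by simp
    moreover have "g dvd h \<or> h dvd g" using ch that h unfolding dvd_chain_def by blast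
    moreover have "h > 0" using h pos by (cases h) auto
    moreover have "g > 0" using that pos by (cases g) auto
    ultimately show ?thesis by (metis dvd_antisym dvd_imp_le le_antisym)
  qed
  have "{y\<in>S. \<exists>c\<in>G. y dvd c} = {y\<in>S. y dvd h}" using all h by (auto intro: dvd_trans)
  hence "Fd S G = Fd S {h}" unfolding Fd_def by simp
  also have "\<dots> = 1 / real h" using Fd_single[OF fin] h G pos by (metis gr0I subsetD)
  finally show ?thesis unfolding h_def .
qed


definition anti :: "nat set \<Rightarrow> bool" where
  "anti C \<longleftrightarrow> (\<forall>a\<in>C. \<forall>b\<in>C. a dvd b \<longrightarrow> a = b)"
definition covp :: "nat set \<Rightarrow> nat set \<Rightarrow> bool" where
  "covp C Z \<longleftrightarrow> (\<forall>T. T \<subseteq> C \<longrightarrow> 2 \<le> card T \<longrightarrow> Gcd T \<in> Z)"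
definition pure :: "nat set \<Rightarrow> nat \<Rightarrow> nat set \<Rightarrow> bool" where
  "pure C c Z \<longleftrightarrow> (\<forall>a\<in>C-{c}. gcd c a \<in> Z)"

lemma ch2: "dvd_chain Z \<Longrightarrow> u \<in> Z \<Longrightarrow> v \<in> Z \<Longrightarrow> u dvd v \<or> v dvd u"
  unfolding dvd_chain_def by blast

lemma covp_pair: "covp C Z \<Longrightarrow> a \<in> C \<Longrightarrow> b \<in> C \<Longrightarrow> a \<noteq> b \<Longrightarrow> gcd a b \<in> Z"
  unfolding covp_def by (erule allE[of _ "{a,b}"]) auto

lemma pure_step:
  fixes C Z W :: "nat set" and k1 k2 m :: nat
  assumes fin: "finite C" and pos: "0 \<notin> C" and an: "anti C"
    and dZW: "Z \<inter> W = {}" and chZ: "dvd_chain Z" and chW: "dvd_chain W"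
    and cv: "covp C (Z \<union> W)"
    and k: "k1 \<in> C" "k2 \<in> C" "k1 \<noteq> k2" and mdef: "m = gcd k1 k2" and mZ: "m \<in> Z"
    and maxm: "\<forall>a\<in>C. \<forall>b\<in>C. a \<noteq> b \<longrightarrow> gcd a b \<le> m"
    and IH: "{c\<in>C. \<not> m dvd c} \<noteq> {} \<Longrightarrow>
       \<exists>c\<in>{c\<in>C. \<not> m dvd c} \<union> {m}. pure ({c\<in>C. \<not> m dvd c} \<union> {m}) c Z \<or> pure ({c\<in>C. \<not> m dvd c} \<union> {m}) c W"
  shows "\<exists>c\<in>C. pure C c Z \<or> pure C c W"
proof -
  define R where "R = {c\<in>C. \<not> m dvd c}"
  define K where "K = {c\<in>C. m dvd c}"
  have CKR: "C = K \<union> R" unfolding K_def R_def by auto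
  have k1K: "k1 \<in> K" and k2K: "k2 \<in> K" unfolding K_def mdef using k by auto
  have posC: "c > 0" if "c \<in> C" for c using pos that by (cases c) auto
  have mpos: "m > 0" unfolding mdef using posC[OF k(1)] by simp
  have mk1: "m dvd k1" and mk2: "m dvd k2" unfolding mdef by auto
  have KK: "gcd a b = m" if "a \<in> K" "b \<in> K" "a \<noteq> b" for a b
  proof -
    have "m dvd gcd a b" using that unfolding K_def by auto
    moreover have "gcd a b \<le> m" using maxm that unfolding K_def by auto
    moreover have "gcd a b > 0" using that posC unfolding K_def by auto
    ultimately show ?thesis by (meson dvd_imp_le le_antisym mpos)
  qed
  have pairs: "gcd a b \<in> Z \<or> gcd a b \<in> W" if "a \<in> C" "b \<in> C" "a \<noteq> b" for a b
    using covp_pair[OF cv that] by auto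
  have gmr: "gcd m r dvd gcd k r" if "k \<in> K" for k r
    using that unfolding K_def by (auto intro: dvd_trans)
  have RK: "r \<noteq> k" if "r \<in> R" "k \<in> K" for r k using that unfolding R_def K_def by auto
  have mR: "m \<notin> R" unfolding R_def by auto
  have ZWd: "False" if "u \<in> Z" "u \<in> W" for u using dZW that by auto
  have LW: "gcd k r \<in> W" if r: "r \<in> R" and rW: "gcd m r \<in> W" and kK: "k \<in> K" for k r
  proof (rule ccontr)
    assume nW: "gcd k r \<notin> W"
    have "k \<in> C" "r \<in> C" using r kK unfolding R_def K_def by auto
    hence "gcd k r \<in> Z" using pairs RK[OF r kK] nW by metis
    hence "m dvd gcd k r \<or> gcd k r dvd m" using ch2[OF chZ mZ] by blast
    thus False
    proof
      assume "m dvd gcd k r" hence "m dvd r" by (meson dvd_trans gcd_dvd2)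
      thus False using r unfolding R_def by auto
    next
      assume "gcd k r dvd m"
      hence "gcd k r dvd gcd m r" by simp
      hence "gcd k r = gcd m r" using gmr[OF kK, of r] by (simp add: dvd_antisym)
      thus False using nW rW by simp
    qed
  qed
  show ?thesis
  proof (cases "R = {}")
    case True
    have "pure C k1 Z" unfolding pure_def
    proof
      fix a assume a: "a \<in> C - {k1}"
      hence "a \<in> K" using True CKR by auto
      thus "gcd k1 a \<in> Z" using KK[OF k1K] a mZ by auto
    qed
    thus ?thesis using k by blast
  next
    case False
    then obtain cs where cs: "cs \<in> R \<union> {m}" and pcs: "pure (R \<union> {m}) cs Z \<or> pure (R \<union> {m}) cs W"
      using IH unfolding R_def by blast
    show ?thesis
    proof (cases "cs = m")
      case True
      show ?thesis
      proof (cases "pure (R \<union> {m}) cs Z")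
        case pZ: True
        have gZ: "gcd m r \<in> Z" if "r \<in> R" for r
          using pZ that mR unfolding pure_def True by auto
        have "\<exists>k\<in>{k1,k2}. \<forall>r\<in>R. gcd k r \<in> Z"
        proof (rule ccontr)
          assume "\<not> ?thesis"
          then obtain r1 r2 where r: "r1 \<in> R" "r2 \<in> R" "gcd k1 r1 \<notin> Z" "gcd k2 r2 \<notin> Z" by auto
          have C12: "r1 \<in> C" "r2 \<in> C" using r unfolding R_def by auto
          have W1: "gcd k1 r1 \<in> W" using pairs[OF k(1) C12(1) RK[OF r(1) k1K, symmetric]] r by auto
          have W2: "gcd k2 r2 \<in> W" using pairs[OF k(2) C12(2) RK[OF r(2) k2K, symmetric]] r by auto
          have gen: "gcd ka ra \<in> Z" if "gcd ka ra dvd gcd kb rb" "ka \<in> K" "kb \<in> K" "ka \<noteq> kb" "ra \<in> R"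
            for ka kb ra rb
          proof -
            have "gcd ka ra dvd kb" using that(1) by (meson dvd_trans gcd_dvd1)
            hence "gcd ka ra dvd gcd ka kb" by simp
            hence "gcd ka ra dvd m" using KK[OF that(2,3,4)] by simp
            hence "gcd ka ra dvd gcd m ra" by simp
            hence "gcd ka ra = gcd m ra" using gmr[OF that(2), of ra] by (simp add: dvd_antisym)
            thus ?thesis using gZ[OF that(5)] by simp
          qed
          from ch2[OF chW W1 W2] show False
          proof
            assume "gcd k1 r1 dvd gcd k2 r2"
            thus False using gen[OF _ k1K k2K k(3) r(1)] r(3) by blast
          next
            assume "gcd k2 r2 dvd gcd k1 r1"
            thus False using gen[OF _ k2K k1K k(3)[symmetric] r(2)] r(4) by blast
          qed
        qed
        then obtain kk where kk: "kk \<in> {k1,k2}" "\<forall>r\<in>R. gcd kk r \<in> Z" by blast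
        have kkK: "kk \<in> K" using kk k1K k2K by auto
        have "pure C kk Z" unfolding pure_def
        proof
          fix a assume a: "a \<in> C - {kk}"
          show "gcd kk a \<in> Z"
          proof (cases "a \<in> K")
            case True thus ?thesis using KK[OF kkK True] a mZ by auto
          next
            case False hence "a \<in> R" using a CKR by auto
            thus ?thesis using kk by auto
          qed
        qed
        thus ?thesis using kkK unfolding K_def by blast
      next
        case pW: False
        hence pW: "pure (R \<union> {m}) cs W" using pcs by simp
        have gW: "gcd m r \<in> W" if "r \<in> R" for r
          using pW that mR unfolding pure_def True by auto
        from False obtain r where r: "r \<in> R" by auto
        have "pure C r W" unfolding pure_def
        proof
          fix a assume a: "a \<in> C - {r}"
          show "gcd r a \<in> W"
          proof (cases "a \<in> K")
            case True thus ?thesis using LW[OF r gW[OF r] True] by (simp add: gcd.commute)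
          next
            case aF: False hence aR: "a \<in> R" using a CKR by auto
            show ?thesis
            proof (rule ccontr)
              assume nW: "gcd r a \<notin> W"
              have rC: "r \<in> C" "a \<in> C" using r aR unfolding R_def by auto
              have tZ: "gcd r a \<in> Z" using pairs[OF rC] a nW by auto
              have "m dvd gcd r a \<or> gcd r a dvd m" using ch2[OF chZ mZ tZ] .
              moreover have "\<not> m dvd gcd r a" using r unfolding R_def by simp
              ultimately have tm: "gcd r a dvd m" by blast
              have W1: "gcd k1 r \<in> W" using LW[OF r gW[OF r] k1K] .
              have W2: "gcd k1 a \<in> W" using LW[OF aR gW[OF aR] k1K] .
              have tk: "gcd r a dvd k1" using tm mk1 by (rule dvd_trans)
              from ch2[OF chW W1 W2] show False
              proof
                assume h: "gcd k1 r dvd gcd k1 a"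
                hence "gcd k1 r dvd a" by (meson dvd_trans gcd_dvd2)
                hence "gcd k1 r dvd gcd r a" by simp
                moreover have "gcd r a dvd gcd k1 r" using tk by simp
                ultimately have "gcd k1 r = gcd r a" by (simp add: dvd_antisym)
                thus False using W1 tZ ZWd by simp
              next
                assume h: "gcd k1 a dvd gcd k1 r"
                hence "gcd k1 a dvd r" by (meson dvd_trans gcd_dvd2)
                hence "gcd k1 a dvd gcd r a" by simp
                moreover have "gcd r a dvd gcd k1 a" using tk by simp
                ultimately have "gcd k1 a = gcd r a" by (simp add: dvd_antisym)
                thus False using W2 tZ ZWd by simp
              qed
            qed
          qed
        qed
        thus ?thesis using r unfolding R_def by blast
      qed
    next
      case csm: False
      hence r: "cs \<in> R" using cs by auto
      have rC: "cs \<in> C" using r unfolding R_def by auto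
      show ?thesis
      proof (cases "pure (R \<union> {m}) cs W")
        case pW: True
        have gW: "gcd m cs \<in> W" using pW csm unfolding pure_def by (auto simp: gcd.commute)
        have "pure C cs W" unfolding pure_def
        proof
          fix a assume a: "a \<in> C - {cs}"
          show "gcd cs a \<in> W"
          proof (cases "a \<in> K")
            case True thus ?thesis using LW[OF r gW True] by (simp add: gcd.commute)
          next
            case False hence "a \<in> R" using a CKR by auto
            thus ?thesis using pW a unfolding pure_def by auto
          qed
        qed
        thus ?thesis using rC by blast
      next
        case pZ': False
        hence pZ: "pure (R \<union> {m}) cs Z" using pcs by simp
        have gZ: "gcd m cs \<in> Z" using pZ csm unfolding pure_def by (auto simp: gcd.commute)
        have rrZ: "gcd cs a \<in> Z" if "a \<in> R" "a \<noteq> cs" for a using pZ that unfolding pure_def by auto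
        show ?thesis
        proof (cases "\<forall>k\<in>K. gcd k cs \<in> Z")
          case True
          have "pure C cs Z" unfolding pure_def
          proof
            fix a assume a: "a \<in> C - {cs}"
            show "gcd cs a \<in> Z"
            proof (cases "a \<in> K")
              case aK: True thus ?thesis using True by (simp add: gcd.commute)
            next
              case False hence "a \<in> R" using a CKR by auto
              thus ?thesis using rrZ a by auto
            qed
          qed
          thus ?thesis using rC by blast
        next
          case False
          then obtain kb where kb: "kb \<in> K" "gcd kb cs \<notin> Z" by auto
          have kbC: "kb \<in> C" using kb unfolding K_def by auto
          have a0W: "gcd kb cs \<in> W" using pairs[OF kbC rC RK[OF r kb(1), symmetric]] kb by auto
          obtain k' where k': "k' \<in> K" "k' \<noteq> kb"
            using k1K k2K k(3) by (metis)
          have k'C: "k' \<in> C" using k' unfolding K_def by auto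
          have mkk: "gcd kb k' = m" using KK[OF kb(1) k'(1) k'(2)[symmetric]] .
          have a0m: "\<not> gcd kb cs dvd m"
          proof
            assume "gcd kb cs dvd m"
            hence "gcd kb cs dvd gcd m cs" by simp
            hence "gcd kb cs = gcd m cs" using gmr[OF kb(1), of cs] by (simp add: dvd_antisym)
            thus False using kb(2) gZ by simp
          qed
          have "pure C k' Z" unfolding pure_def
          proof
            fix a assume a: "a \<in> C - {k'}"
            show "gcd k' a \<in> Z"
            proof (cases "a \<in> K")
              case True thus ?thesis using KK[OF k'(1) True] a mZ by auto
            next
              case False hence aR: "a \<in> R" using a CKR by auto
              have aC: "a \<in> C" using aR unfolding R_def by auto
              show ?thesis
              proof (rule ccontr)
                assume nZ: "gcd k' a \<notin> Z"
                have bW: "gcd k' a \<in> W" using pairs[OF k'C aC RK[OF aR k'(1), symmetric]] nZ by auto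
                from ch2[OF chW a0W bW] show False
                proof
                  assume "gcd kb cs dvd gcd k' a"
                  hence "gcd kb cs dvd k'" by (meson dvd_trans gcd_dvd1)
                  hence "gcd kb cs dvd gcd kb k'" by simp
                  thus False using a0m mkk by simp
                next
                  assume ba: "gcd k' a dvd gcd kb cs"
                  hence "gcd k' a dvd kb" by (meson dvd_trans gcd_dvd1)
                  hence "gcd k' a dvd gcd kb k'" by simp
                  hence bm: "gcd k' a dvd m" using mkk by simp
                  hence "gcd k' a dvd gcd m a" by simp
                  hence beq: "gcd k' a = gcd m a" using gmr[OF k'(1), of a] by (simp add: dvd_antisym)
                  show False
                  proof (cases "a = cs")
                    case True
                    thus False using beq gZ bW ZWd by simp
                  next
                    case acs: False
                    have vZ: "gcd cs a \<in> Z" using rrZ[OF aR acs] .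
                    have "m dvd gcd cs a \<or> gcd cs a dvd m" using ch2[OF chZ mZ vZ] .
                    moreover have "\<not> m dvd gcd cs a" using r unfolding R_def by simp
                    ultimately have vm: "gcd cs a dvd m" by blast
                    have "gcd k' a dvd cs" using ba by (meson dvd_trans gcd_dvd2)
                    hence bv: "gcd k' a dvd gcd cs a" by simp
                    have "gcd cs a dvd gcd m a" using vm by simp
                    hence "gcd cs a dvd gcd k' a" using beq by simp
                    hence "gcd k' a = gcd cs a" using bv by (simp add: dvd_antisym)
                    thus False using vZ bW ZWd by simp
                  qed
                qed
              qed
            qed
          qed
          thus ?thesis using k'C by blast
        qed
      qed
    qed
  qed
qed


lemma Gcd_insert2: "Gcd (insert (gcd a b) T) = Gcd (insert a (insert b T))" for a b :: nat
  by (simp add: gcd.assoc)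

lemma pure_exists:
  fixes C X Y :: "nat set"
  assumes "finite C" "2 \<le> card C" "0 \<notin> C" "anti C" "X \<inter> Y = {}" "dvd_chain X" "dvd_chain Y"
    "covp C (X \<union> Y)"
  shows "\<exists>c\<in>C. pure C c X \<or> pure C c Y"
  using assms
proof (induction "card C" arbitrary: C rule: less_induct)
  case less
  note fin = less.prems(1) and c2 = less.prems(2) and pos = less.prems(3) and an = less.prems(4)
    and dXY = less.prems(5) and chX = less.prems(6) and chY = less.prems(7) and cv = less.prems(8)
  define PG where "PG = {gcd a b | a b. a \<in> C \<and> b \<in> C \<and> a \<noteq> b}"
  have finPG: "finite PG"
  proof -
    have "PG \<subseteq> (\<lambda>(a,b). gcd a b) ` (C \<times> C)" unfolding PG_def by auto
    thus ?thesis using fin by (meson finite_SigmaI finite_imageI finite_subset)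
  qed
  obtain a0 b0 where ab0: "a0 \<in> C" "b0 \<in> C" "a0 \<noteq> b0"
  proof -
    from c2 have "card C \<ge> 2" .
    then obtain a0 where "a0 \<in> C" using fin by fastforce
    moreover have "C - {a0} \<noteq> {}"
    proof
      assume "C - {a0} = {}" hence "C \<subseteq> {a0}" by auto
      hence "card C \<le> 1" using card_mono[of "{a0}" C] by simp
      thus False using c2 by simp
    qed
    then obtain b0 where "b0 \<in> C - {a0}" by auto
    ultimately show ?thesis using that by auto
  qed
  have PGne: "PG \<noteq> {}" unfolding PG_def using ab0 by blast
  define m where "m = Max PG"
  have "m \<in> PG" unfolding m_def using finPG PGne by simp
  then obtain k1 k2 where k: "k1 \<in> C" "k2 \<in> C" "k1 \<noteq> k2" and mdef: "m = gcd k1 k2"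
    unfolding PG_def by blast
  have maxm: "\<forall>a\<in>C. \<forall>b\<in>C. a \<noteq> b \<longrightarrow> gcd a b \<le> m"
    unfolding m_def PG_def using finPG PG_def by (auto intro!: Max_ge)
  have mXY: "m \<in> X \<union> Y" using covp_pair[OF cv k] mdef by simp
  have posC: "c > 0" if "c \<in> C" for c using pos that by (cases c) auto
  have mpos: "m > 0" unfolding mdef using posC[OF k(1)] by simp
  define R where "R = {c\<in>C. \<not> m dvd c}"
  have IH: "\<exists>c\<in>R \<union> {m}. pure (R \<union> {m}) c X \<or> pure (R \<union> {m}) c Y" if Rne: "R \<noteq> {}"
  proof -
    have mR: "m \<notin> R" unfolding R_def by simp
    have RC: "R \<subseteq> C - {k1, k2}" unfolding R_def mdef by auto
    have finR: "finite R" using fin unfolding R_def by simp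
    have "card R \<le> card (C - {k1,k2})" using card_mono[OF _ RC] fin by simp
    also have "\<dots> = card C - 2" using k fin by (simp add: card_Diff_subset)
    finally have cR: "card R \<le> card C - 2" .
    have cs: "card (R \<union> {m}) = card R + 1" using mR finR by simp
    have lt: "card (R \<union> {m}) < card C" using cs cR c2 by linarith
    have ge2: "2 \<le> card (R \<union> {m})" using cs Rne finR by (simp add: Suc_le_eq card_gt_0_iff)
    have pos': "0 \<notin> R \<union> {m}" using pos mpos unfolding R_def by auto
    have mk1: "m dvd k1" unfolding mdef by simp
    have an': "anti (R \<union> {m})" unfolding anti_def
    proof (intro ballI impI)
      fix a b assume a: "a \<in> R \<union> {m}" and b: "b \<in> R \<union> {m}" and ab: "a dvd b"
      show "a = b"
      proof (cases "a = m")
        case am: True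
        show ?thesis
        proof (cases "b = m")
          case True thus ?thesis using am by simp
        next
          case False hence "b \<in> R" using b by simp
          thus ?thesis using ab am unfolding R_def by simp
        qed
      next
        case anm: False hence aR: "a \<in> R" using a by simp
        show ?thesis
        proof (cases "b = m")
          case True
          hence "a dvd k1" using ab mk1 dvd_trans by blast
          hence "a = k1" using an aR k(1) unfolding anti_def R_def by blast
          hence "m dvd a" using mk1 by simp
          thus ?thesis using aR unfolding R_def by simp
        next
          case False hence "b \<in> R" using b by simp
          thus ?thesis using an aR ab unfolding anti_def R_def by blast
        qed
      qed
    qed
    have cv': "covp (R \<union> {m}) (X \<union> Y)" unfolding covp_def
    proof (intro allI impI)
      fix T assume T: "T \<subseteq> R \<union> {m}" and cT: "2 \<le> card T"
      show "Gcd T \<in> X \<union> Y"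
      proof (cases "m \<in> T")
        case False
        hence "T \<subseteq> C" using T unfolding R_def by auto
        thus ?thesis using cv cT unfolding covp_def by blast
      next
        case True
        define T0 where "T0 = T - {m}"
        have TT: "T = insert m T0" unfolding T0_def using True by auto
        define T' where "T' = insert k1 (insert k2 T0)"
        have "Gcd T = Gcd T'" unfolding TT T'_def mdef by (rule Gcd_insert2)
        moreover have "T' \<subseteq> C" unfolding T'_def T0_def using T k unfolding R_def by auto
        moreover have "2 \<le> card T'"
        proof -
          have "finite T'" using \<open>T' \<subseteq> C\<close> fin finite_subset by auto
          moreover have "{k1,k2} \<subseteq> T'" unfolding T'_def by auto
          ultimately have "card {k1,k2} \<le> card T'" by (rule card_mono)
          thus ?thesis using k(3) by simp
        qed
        ultimately show ?thesis using cv unfolding covp_def by auto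
      qed
    qed
    have finC': "finite (R \<union> {m})" using finR by simp
    show ?thesis using less.hyps[OF lt finC' ge2 pos' an' dXY chX chY cv'] .
  qed
  show ?case
  proof (cases "m \<in> X")
    case True
    have cvXY: "covp C (X \<union> Y)" using cv .
    show ?thesis
      using pure_step[OF fin pos an dXY chX chY cvXY k mdef True maxm] IH unfolding R_def by blast
  next
    case False
    hence mY: "m \<in> Y" using mXY by simp
    have dYX: "Y \<inter> X = {}" using dXY by auto
    have cvYX: "covp C (Y \<union> X)" using cv by (simp add: Un_commute)
    have "\<exists>c\<in>C. pure C c Y \<or> pure C c X"
      using pure_step[OF fin pos an dYX chY chX cvYX k mdef mY maxm] IH unfolding R_def by blast
    thus ?thesis by blast
  qed
qed

lemma proper_mult: "h dvd c \<Longrightarrow> h \<noteq> c \<Longrightarrow> c > 0 \<Longrightarrow> real c \<ge> 2 * real h" for h c :: nat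
proof -
  assume "h dvd c" "h \<noteq> c" "c > 0"
  then obtain k where k: "c = h * k" by (auto elim: dvdE)
  have "k \<noteq> 0" using \<open>c > 0\<close> k by auto
  moreover have "k \<noteq> 1" using k \<open>h \<noteq> c\<close> by auto
  ultimately have "k \<ge> 2" by simp
  hence "c \<ge> h * 2" using k by simp
  thus ?thesis by simp
qed

lemma F_nonpos:
  fixes S C X Y :: "nat set"
  assumes finS: "finite S" and posS: "0 \<notin> S" and gc: "gcd_closed S"
    and "C \<subseteq> S" "2 \<le> card C" "anti C" "X \<inter> Y = {}" "dvd_chain X" "dvd_chain Y"
    "covp C (X \<union> Y)"
  shows "Fd S C \<le> 0"
  using assms(4-)
proof (induction "card C" arbitrary: C rule: less_induct)
  case less
  note CS = less.prems(1) and c2 = less.prems(2) and an = less.prems(3) and dXY = less.prems(4)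
    and chX = less.prems(5) and chY = less.prems(6) and cv = less.prems(7)
  have fin: "finite C" using CS finS finite_subset by auto
  have pos: "0 \<notin> C" using CS posS by auto
  obtain c0 Z where c0: "c0 \<in> C" and pZ: "pure C c0 Z" and Z: "Z = X \<or> Z = Y"
    using pure_exists[OF fin c2 pos an dXY chX chY cv] by blast
  have chZ: "dvd_chain Z" using Z chX chY by auto
  define C' where "C' = C - {c0}"
  define G where "G = (\<lambda>a. gcd a c0) ` C'"
  have cC': "card C' = card C - 1" unfolding C'_def using c0 fin by simp
  have C'ne: "C' \<noteq> {}"
  proof
    assume "C' = {}" hence "card C - 1 = 0" using cC' by simp
    thus False using c2 by simp
  qed
  have GZ: "G \<subseteq> Z" using pZ unfolding G_def C'_def pure_def by (auto simp: gcd.commute)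
  have chG: "dvd_chain G" using chZ GZ unfolding dvd_chain_def by blast
  have c0S: "c0 \<in> S" using c0 CS by auto
  have GS: "G \<subseteq> S" using gc CS c0S unfolding G_def C'_def gcd_closed_def by auto
  have finG: "finite G" unfolding G_def C'_def using fin by simp
  have Gne: "G \<noteq> {}" unfolding G_def using C'ne by simp
  have posG: "0 \<notin> G" using GS posS by auto
  define h where "h = Max G"
  have hG: "h \<in> G" unfolding h_def using finG Gne by simp
  then obtain c1 where c1: "c1 \<in> C'" and hc1: "h = gcd c1 c0" unfolding G_def by auto
  have c0pos: "c0 > 0" using pos c0 by (cases c0) auto
  have c1C: "c1 \<in> C" "c1 \<noteq> c0" using c1 unfolding C'_def by auto
  have c1pos: "c1 > 0" using pos c1C by (cases c1) auto
  have hpos: "h > 0" using hG posG by (cases h) auto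
  have hc0: "h dvd c0" "h \<noteq> c0"
  proof -
    show "h dvd c0" unfolding hc1 by simp
    show "h \<noteq> c0"
    proof
      assume "h = c0" hence "c0 dvd c1" unfolding hc1 by (metis gcd_dvd1)
      thus False using an c0 c1C unfolding anti_def by blast
    qed
  qed
  have FG: "Fd S G = 1 / real h" unfolding h_def by (rule Fd_chain[OF finS GS finG Gne chG posG])
  have C'S: "C' \<subseteq> S" using CS unfolding C'_def by auto
  have CC': "C = insert c0 C'" unfolding C'_def using c0 by auto
  have FC: "Fd S C = Fd S C' + 1 / real c0 - 1 / real h"
    unfolding CC' using Fd_insert[OF finS gc c0S c0pos C'S] FG unfolding G_def by simp
  have hlt: "1 / real c0 \<le> 1 / (2 * real h)"
    using proper_mult[OF hc0 c0pos] hpos by (simp add: frac_le)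
  show ?case
  proof (cases "card C' = 1")
    case True
    then obtain c where "C' = {c}" by (meson card_1_singletonE)
    hence C'1: "C' = {c1}" using c1 by auto
    have c1S: "c1 \<in> S" using C'S C'1 by auto
    have "Fd S C' = 1 / real c1" unfolding C'1 using Fd_single[OF finS c1S c1pos] .
    moreover have "h dvd c1" "h \<noteq> c1"
    proof -
      show "h dvd c1" unfolding hc1 by simp
      show "h \<noteq> c1"
      proof
        assume "h = c1" hence "c1 dvd c0" unfolding hc1 by (metis gcd_dvd2)
        thus False using an c0 c1C unfolding anti_def by blast
      qed
    qed
    hence "1 / real c1 \<le> 1 / (2 * real h)"
      using proper_mult[of h c1] c1pos hpos by (simp add: frac_le)
    ultimately have "Fd S C \<le> 1 / (2 * real h) + 1 / (2 * real h) - 1 / real h"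
      using FC hlt by linarith
    thus ?thesis by simp
  next
    case False
    moreover have "card C' \<noteq> 0" using C'ne fin unfolding C'_def by simp
    ultimately have c2': "2 \<le> card C'" by simp
    have lt: "card C' < card C" using cC' c2 by simp
    have an': "anti C'" using an unfolding anti_def C'_def by blast
    have cv': "covp C' (X \<union> Y)" using cv unfolding covp_def C'_def by blast
    have "Fd S C' \<le> 0" using less.hyps[OF lt C'S c2' an' dXY chX chY cv'] .
    moreover have "1 / real c0 < 1 / real h"
      using hpos c0pos dvd_imp_le[OF hc0(1) c0pos] hc0(2) by (simp add: frac_less2)
    ultimately show ?thesis using FC by linarith
  qed
qed


lemma cover_down:
  assumes finS: "finite S" and posS: "0 \<notin> S" and x: "x \<in> S"
  shows "{y\<in>S. y dvd x \<and> y < x} = {y\<in>S. \<exists>c\<in>covered_by S x. y dvd c}"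
proof
  show "{y\<in>S. \<exists>c\<in>covered_by S x. y dvd c} \<subseteq> {y\<in>S. y dvd x \<and> y < x}"
  proof
    fix y assume "y \<in> {y\<in>S. \<exists>c\<in>covered_by S x. y dvd c}"
    then obtain c where y: "y \<in> S" and c: "c \<in> covered_by S x" "y dvd c" by auto
    have cS: "c \<in> S" "c dvd x" "c \<noteq> x" using c unfolding covered_by_def by auto
    have xpos: "x > 0" using x posS by (cases x) auto
    have cpos: "c > 0" using cS posS by (cases c) auto
    have "c < x" using cS xpos dvd_imp_le le_neq_implies_less by blast
    moreover have "y \<le> c" using c cpos dvd_imp_le by blast
    ultimately show "y \<in> {y\<in>S. y dvd x \<and> y < x}" using y c cS by (auto intro: dvd_trans)
  qed
next
  show "{y\<in>S. y dvd x \<and> y < x} \<subseteq> {y\<in>S. \<exists>c\<in>covered_by S x. y dvd c}"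
  proof
    fix y assume y: "y \<in> {y\<in>S. y dvd x \<and> y < x}"
    define Z where "Z = {z\<in>S. y dvd z \<and> z dvd x \<and> z \<noteq> x}"
    have finZ: "finite Z" unfolding Z_def using finS by simp
    have yZ: "y \<in> Z" unfolding Z_def using y by auto
    define c where "c = Max Z"
    have cZ: "c \<in> Z" unfolding c_def using finZ yZ by (metis Max_in empty_iff)
    have cmax: "z \<le> c" if "z \<in> Z" for z unfolding c_def using finZ that by simp
    have "c \<in> covered_by S x" unfolding covered_by_def
    proof (intro CollectI conjI)
      show "c \<in> S" "c dvd x" "c \<noteq> x" using cZ unfolding Z_def by auto
      show "\<not> (\<exists>z\<in>S. c dvd z \<and> z dvd x \<and> z \<noteq> c \<and> z \<noteq> x)"
      proof
        assume "\<exists>z\<in>S. c dvd z \<and> z dvd x \<and> z \<noteq> c \<and> z \<noteq> x"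
        then obtain z where z: "z \<in> S" "c dvd z" "z dvd x" "z \<noteq> c" "z \<noteq> x" by auto
        have "z \<in> Z" unfolding Z_def using z cZ unfolding Z_def by (auto intro: dvd_trans)
        hence "z \<le> c" by (rule cmax)
        moreover have "z > 0" using z posS by (cases z) auto
        hence "c \<le> z" using z(2) dvd_imp_le by blast
        ultimately show False using z(4) by simp
      qed
    qed
    moreover have "y dvd c" using cZ unfolding Z_def by simp
    ultimately show "y \<in> {y\<in>S. \<exists>c\<in>covered_by S x. y dvd c}" using y by auto
  qed
qed

lemma lam_cov:
  assumes finS: "finite S" and posS: "0 \<notin> S" and x: "x \<in> S"
  shows "lam S x = 1 / real x - Fd S (covered_by S x)"
proof -
  have xpos: "x \<noteq> 0" "x > 0" using x posS by (auto intro: gr0I)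
  show ?thesis
    by (subst lam.simps) (simp add: xpos Fd_def cover_down[OF finS posS x])
qed

lemma lam_sign:
  assumes finS: "finite S" and posS: "0 \<notin> S" and gc: "gcd_closed S" and x: "x \<in> S"
    and dc: "generates_double_chain S x"
  shows "(card (covered_by S x) = 1 \<longrightarrow> lam S x < 0) \<and> (card (covered_by S x) \<noteq> 1 \<longrightarrow> lam S x > 0)"
proof -
  define C where "C = covered_by S x"
  have CS: "C \<subseteq> S" unfolding C_def covered_by_def by auto
  have finC: "finite C" using CS finS finite_subset by auto
  have xpos: "x > 0" using x posS by (cases x) auto
  have L: "lam S x = 1 / real x - Fd S C" unfolding C_def by (rule lam_cov[OF finS posS x])
  have anC: "anti C" unfolding anti_def
  proof (intro ballI impI)
    fix a b assume a: "a \<in> C" and b: "b \<in> C" and ab: "a dvd b"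
    show "a = b"
    proof (rule ccontr)
      assume "a \<noteq> b"
      moreover have "b \<in> S" "b dvd x" "b \<noteq> x" using b unfolding C_def covered_by_def by auto
      ultimately have "\<exists>z\<in>S. a dvd z \<and> z dvd x \<and> z \<noteq> a \<and> z \<noteq> x" using ab by blast
      thus False using a unfolding C_def covered_by_def by blast
    qed
  qed
  show ?thesis
  proof (cases "card C = 0")
    case True
    hence "C = {}" using finC by simp
    thus ?thesis using L xpos True unfolding C_def[symmetric] by simp
  next
    case c0: False
    show ?thesis
    proof (cases "card C = 1")
      case True
      then obtain c where Cc: "C = {c}" by (meson card_1_singletonE)
      have c: "c \<in> S" "c dvd x" "c \<noteq> x" using Cc unfolding C_def covered_by_def by auto
      have cpos: "c > 0" using c posS by (cases c) auto
      have "c < x" using c xpos dvd_imp_le le_neq_implies_less by blast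
      hence "1 / real x < 1 / real c" using cpos by (simp add: frac_less2)
      moreover have "Fd S C = 1 / real c" unfolding Cc using Fd_single[OF finS c(1) cpos] .
      ultimately show ?thesis using L True unfolding C_def[symmetric] by simp
    next
      case False
      hence c2: "2 \<le> card C" using c0 by simp
      obtain A B where AB: "A \<inter> B = {}" "dvd_chain A" "dvd_chain B" "meetcl C - C = A \<union> B"
        using dc unfolding generates_double_chain_def C_def by blast
      have cv: "covp C (A \<union> B)" unfolding covp_def
      proof (intro allI impI)
        fix T assume T: "T \<subseteq> C" and cT: "2 \<le> card T"
        have finT: "finite T" using T finC finite_subset by auto
        have Tne: "T \<noteq> {}" using cT by auto
        have "Gcd T \<in> meetcl C" unfolding meetcl_def using T finT Tne by blast
        moreover have "Gcd T \<notin> C"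
        proof
          assume gC: "Gcd T \<in> C"
          have "T - {Gcd T} \<noteq> {}"
          proof
            assume "T - {Gcd T} = {}" hence "T \<subseteq> {Gcd T}" by auto
            hence "card T \<le> 1" using card_mono[of "{Gcd T}" T] by simp
            thus False using cT by simp
          qed
          then obtain t where t: "t \<in> T" "t \<noteq> Gcd T" by auto
          have "Gcd T dvd t" using t by simp
          thus False using anC gC T t unfolding anti_def by blast
        qed
        ultimately show "Gcd T \<in> A \<union> B" using AB by auto
      qed
      have "Fd S C \<le> 0" using F_nonpos[OF finS posS gc CS c2 anC AB(1,2,3) cv] .
      moreover have "1 / real x > 0" using xpos by simp
      ultimately have "lam S x > 0" using L by linarith
      thus ?thesis using False unfolding C_def[symmetric] by simp
    qed
  qed
qed


lemma mult_dmat_index: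
  assumes M: "M \<in> carrier_mat r n" and i: "i < r" and k: "k < n"
  shows "(M * dmat n d) $$ (i,k) = M $$ (i,k) * d k"
proof -
  have "(M * dmat n d) $$ (i,k) = (\<Sum>t\<in>{0..<n}. M $$ (i,t) * (if t = k then d t else 0))"
    using M i k by (simp add: scalar_prod_def dmat_def)
  also have "\<dots> = (\<Sum>t\<in>{0..<n}. (if t = k then M $$ (i,t) * d k else 0))"
    by (rule sum.cong) auto
  also have "\<dots> = M $$ (i,k) * d k" using k by (simp add: sum.delta)
  finally show ?thesis .
qed

lemma sum_nth_distinct:
  assumes "distinct xs"
  shows "(\<Sum>k\<in>{k. k < length xs \<and> Q (xs ! k)}. f (xs ! k)) = (\<Sum>y\<in>{y\<in>set xs. Q y}. f y)"
proof -
  have inj: "inj_on ((!) xs) {k. k < length xs \<and> Q (xs ! k)}"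
    using assms by (auto simp: inj_on_def nth_eq_iff_index_eq)
  have img: "(!) xs ` {k. k < length xs \<and> Q (xs ! k)} = {y\<in>set xs. Q y}"
    by (auto simp: in_set_conv_nth)
  show ?thesis using sum.reindex[OF inj, of f] img by simp
qed

lemma card_nth_distinct:
  assumes "distinct xs"
  shows "card {k. k < length xs \<and> Q (xs ! k)} = card {y\<in>set xs. Q y}"
  using sum_nth_distinct[OF assms, where Q=Q and f="\<lambda>_. 1::nat"] by simp

lemma lcm_factor:
  fixes xs :: "nat list" and S :: "nat set"
  assumes dist: "distinct xs" and set: "set xs = S" and posS: "0 \<notin> S" and gc: "gcd_closed S"
  defines "n \<equiv> length xs"
  defines "P \<equiv> mat n n (\<lambda>(i,k). if xs ! k dvd xs ! i then real (xs ! i) else 0)"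
  shows "lcm_matrix xs = P * dmat n (\<lambda>k. lam S (xs ! k)) * transpose_mat P"
proof (rule eq_matI)
  have finS: "finite S" using set by auto
  have P: "P \<in> carrier_mat n n" unfolding P_def by simp
  have PD: "P * dmat n (\<lambda>k. lam S (xs ! k)) \<in> carrier_mat n n" using P by simp
  fix i j assume "i < dim_row (P * dmat n (\<lambda>k. lam S (xs ! k)) * transpose_mat P)"
    "j < dim_col (P * dmat n (\<lambda>k. lam S (xs ! k)) * transpose_mat P)"
  hence ij: "i < n" "j < n" using P by auto
  define a where "a = xs ! i"
  define b where "b = xs ! j"
  have aS: "a \<in> S" and bS: "b \<in> S" unfolding a_def b_def using ij set n_def by auto
  have apos: "a > 0" and bpos: "b > 0" using aS bS posS by (auto intro: gr0I)
  define g where "g = gcd a b"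
  have gS: "g \<in> S" unfolding g_def using gc aS bS unfolding gcd_closed_def by auto
  have gpos: "g > 0" unfolding g_def using apos by simp
  have "(P * dmat n (\<lambda>k. lam S (xs ! k)) * transpose_mat P) $$ (i,j)
      = (\<Sum>k\<in>{0..<n}. (P * dmat n (\<lambda>k. lam S (xs ! k))) $$ (i,k) * P $$ (j,k))"
    using PD P ij by (simp add: scalar_prod_def)
  also have "\<dots> = (\<Sum>k\<in>{0..<n}. (if xs ! k dvd g then real a * real b * lam S (xs ! k) else 0))"
  proof (rule sum.cong[OF refl])
    fix k assume k: "k \<in> {0..<n}"
    have "(P * dmat n (\<lambda>k. lam S (xs ! k))) $$ (i,k) = P $$ (i,k) * lam S (xs ! k)"
      using mult_dmat_index[OF P ij(1)] k by simp
    moreover have "P $$ (i,k) = (if xs ! k dvd a then real a else 0)"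
      unfolding P_def a_def using k ij by simp
    moreover have "P $$ (j,k) = (if xs ! k dvd b then real b else 0)"
      unfolding P_def b_def using k ij by simp
    moreover have "xs ! k dvd g \<longleftrightarrow> xs ! k dvd a \<and> xs ! k dvd b" unfolding g_def by simp
    ultimately show "(P * dmat n (\<lambda>k. lam S (xs ! k))) $$ (i,k) * P $$ (j,k) =
      (if xs ! k dvd g then real a * real b * lam S (xs ! k) else 0)"
      by (simp add: mult_ac)
  qed
  also have "\<dots> = (\<Sum>k\<in>{k. k < n \<and> xs ! k dvd g}. real a * real b * lam S (xs ! k))"
  proof -
    have "{k. k < n \<and> xs ! k dvd g} = {k\<in>{0..<n}. xs ! k dvd g}" by auto
    thus ?thesis using sum.inter_filter[of "{0..<n}" "\<lambda>k. real a * real b * lam S (xs ! k)" "\<lambda>k. xs ! k dvd g"]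
      by simp
  qed
  also have "\<dots> = (\<Sum>y\<in>{y\<in>set xs. y dvd g}. real a * real b * lam S y)"
    unfolding n_def by (rule sum_nth_distinct[OF dist])
  also have "\<dots> = real a * real b * (\<Sum>y\<in>{y\<in>S. y dvd g}. lam S y)"
    unfolding set by (simp only: sum_distrib_left)
  also have "\<dots> = real a * real b / real g" using sum_lam_div[OF finS gS gpos] by simp
  also have "\<dots> = real (lcm a b)"
  proof -
    have "a * b = g * lcm a b" unfolding g_def by (rule prod_gcd_lcm_nat)
    hence "real a * real b = real g * real (lcm a b)" by (metis of_nat_mult)
    thus ?thesis using gpos by (simp add: field_simps)
  qed
  also have "\<dots> = lcm_matrix xs $$ (i,j)" unfolding lcm_matrix_def a_def b_def using ij n_def by simp
  finally show "lcm_matrix xs $$ (i,j) = (P * dmat n (\<lambda>k. lam S (xs ! k)) * transpose_mat P) $$ (i,j)" by simp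
qed (auto simp: lcm_matrix_def n_def P_def)


lemma detP_nonzero:
  fixes xs :: "nat list"
  assumes dist: "distinct xs" and pos: "0 \<notin> set xs"
  defines "n \<equiv> length xs"
  defines "P \<equiv> mat n n (\<lambda>(i,k). if xs ! k dvd xs ! i then real (xs ! i) else 0)"
  shows "det P \<noteq> 0"
proof
  have P: "P \<in> carrier_mat n n" unfolding P_def by simp
  assume "det P = 0"
  then obtain v where v: "v \<in> carrier_vec n" "v \<noteq> 0\<^sub>v n" "P *\<^sub>v v = 0\<^sub>v n"
    using det_0_iff_vec_prod_zero[OF P] by auto
  have xpos: "xs ! i > 0" if "i < n" for i using pos that unfolding n_def by (metis gr0I nth_mem)
  have rowsum: "(\<Sum>k\<in>{k. k < n \<and> xs ! k dvd xs ! i}. v $ k) = 0" if i: "i < n" for i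
  proof -
    have "0 = (P *\<^sub>v v) $ i" using v(3) i by simp
    also have "\<dots> = (\<Sum>k\<in>{0..<n}. P $$ (i,k) * v $ k)" using P v(1) i by (simp add: scalar_prod_def)
    also have "\<dots> = (\<Sum>k\<in>{0..<n}. if xs ! k dvd xs ! i then real (xs ! i) * v $ k else 0)"
      by (rule sum.cong) (auto simp: P_def i)
    also have "\<dots> = (\<Sum>k\<in>{k\<in>{0..<n}. xs ! k dvd xs ! i}. real (xs ! i) * v $ k)"
      by (rule sum.inter_filter[symmetric]) simp
    also have "{k\<in>{0..<n}. xs ! k dvd xs ! i} = {k. k < n \<and> xs ! k dvd xs ! i}" by auto
    finally have "real (xs ! i) * (\<Sum>k\<in>{k. k < n \<and> xs ! k dvd xs ! i}. v $ k) = 0"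
      by (simp add: sum_distrib_left)
    thus ?thesis using xpos[OF i] by simp
  qed
  have main: "\<forall>i<n. xs ! i = N \<longrightarrow> v $ i = 0" for N
  proof (induction N rule: less_induct)
    case (less N)
    show ?case
    proof (intro allI impI)
      fix i assume i: "i < n" and xi: "xs ! i = N"
      have eq: "{k. k < n \<and> xs ! k dvd xs ! i} = insert i {k. k < n \<and> xs ! k dvd xs ! i \<and> k \<noteq> i}"
        using i by auto
      have z: "(\<Sum>k\<in>{k. k < n \<and> xs ! k dvd xs ! i \<and> k \<noteq> i}. v $ k) = 0"
      proof (rule sum.neutral, intro ballI)
        fix k assume k: "k \<in> {k. k < n \<and> xs ! k dvd xs ! i \<and> k \<noteq> i}"
        have "xs ! k \<noteq> xs ! i" using k i dist unfolding n_def by (simp add: nth_eq_iff_index_eq)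
        moreover have "xs ! k \<le> xs ! i" using k xpos[OF i] dvd_imp_le by blast
        ultimately have "xs ! k < N" using xi by simp
        thus "v $ k = 0" using less.IH k by blast
      qed
      have "(\<Sum>k\<in>{k. k < n \<and> xs ! k dvd xs ! i}. v $ k) = v $ i + (\<Sum>k\<in>{k. k < n \<and> xs ! k dvd xs ! i \<and> k \<noteq> i}. v $ k)"
        unfolding eq by (subst sum.insert) auto
      thus "v $ i = 0" using rowsum[OF i] z by simp
    qed
  qed
  have "v = 0\<^sub>v n" using v(1) main by (intro eq_vecI) auto
  thus False using v(2) by simp
qed

theorem theorem5p1:
  fixes xs :: "nat list" and S :: "nat set"
  assumes "distinct xs" and "set xs = S"
    and "0 \<notin> S"
    and "gcd_closed S"
    and "\<forall>x\<in>S. generates_double_chain S x"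
  shows "inertia (lcm_matrix xs) =
           (card {x \<in> S. card (covered_by S x) \<noteq> 1},
            card {x \<in> S. card (covered_by S x) = 1},
            0)
       \<and> pos_inertia (lcm_matrix xs) = length xs - neg_inertia (lcm_matrix xs)"
proof -
  note dist = assms(1) and set = assms(2) and posS = assms(3) and gc = assms(4) and dc = assms(5)
  have finS: "finite S" using set by auto
  define n where "n = length xs"
  define P where "P = mat n n (\<lambda>(i,k). if xs ! k dvd xs ! i then real (xs ! i) else 0)"
  define l where "l = (\<lambda>k. lam S (xs ! k))"
  have P: "P \<in> carrier_mat n n" unfolding P_def by simp
  have fac: "lcm_matrix xs = P * dmat n l * transpose_mat P"
    unfolding P_def l_def n_def by (rule lcm_factor[OF dist set posS gc])
  have detP: "det P \<noteq> 0" unfolding P_def n_def by (rule detP_nonzero[OF dist]) (use set posS in simp)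
  have sgn: "(card (covered_by S x) = 1 \<longrightarrow> lam S x < 0) \<and> (card (covered_by S x) \<noteq> 1 \<longrightarrow> lam S x > 0)"
    if "x \<in> S" for x using lam_sign[OF finS posS gc that] dc that by blast
  have l0: "\<forall>i<n. l i \<noteq> 0"
  proof (intro allI impI)
    fix i assume "i < n" hence "xs ! i \<in> S" using set unfolding n_def by auto
    thus "l i \<noteq> 0" unfolding l_def using sgn by (cases "card (covered_by S (xs ! i)) = 1") force+
  qed
  have inr: "pos_inertia (lcm_matrix xs) = card {i. i < n \<and> l i > 0}"
    "neg_inertia (lcm_matrix xs) = card {i. i < n \<and> l i < 0}"
    "zero_inertia (lcm_matrix xs) = 0"
    using inertia_congruence[OF P detP l0 fac] by auto
  have cpos: "card {i. i < n \<and> l i > 0} = card {x \<in> S. card (covered_by S x) \<noteq> 1}"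
  proof -
    have "card {i. i < n \<and> l i > 0} = card {x\<in>set xs. lam S x > 0}"
      unfolding l_def n_def by (rule card_nth_distinct[OF dist])
    also have "{x\<in>set xs. lam S x > 0} = {x \<in> S. card (covered_by S x) \<noteq> 1}"
      unfolding set using sgn by fastforce
    finally show ?thesis .
  qed
  have cneg: "card {i. i < n \<and> l i < 0} = card {x \<in> S. card (covered_by S x) = 1}"
  proof -
    have "card {i. i < n \<and> l i < 0} = card {x\<in>set xs. lam S x < 0}"
      unfolding l_def n_def by (rule card_nth_distinct[OF dist])
    also have "{x\<in>set xs. lam S x < 0} = {x \<in> S. card (covered_by S x) = 1}"
      unfolding set using sgn by fastforce
    finally show ?thesis .
  qed
  have tot: "card {x \<in> S. card (covered_by S x) \<noteq> 1} + card {x \<in> S. card (covered_by S x) = 1} = length xs"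
  proof -
    have "card {x \<in> S. card (covered_by S x) \<noteq> 1} + card {x \<in> S. card (covered_by S x) = 1}
        = card ({x \<in> S. card (covered_by S x) \<noteq> 1} \<union> {x \<in> S. card (covered_by S x) = 1})"
      by (rule card_Un_disjoint[symmetric]) (use finS in auto)
    also have "{x \<in> S. card (covered_by S x) \<noteq> 1} \<union> {x \<in> S. card (covered_by S x) = 1} = S" by auto
    also have "card S = length xs" using distinct_card[OF dist] set by simp
    finally show ?thesis .
  qed
  show ?thesis unfolding inertia_def using inr cpos cneg tot by simp
qed


end
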